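(* Let $q$ be a prime power, let $G$ be the incidence graph of a projective plane of order $q$, let $e_0=v_0v_1$ be an edge of $G$, and let $\hat G$ be the graph obtained from two disjoint copies $G^{(1)},G^{(2)}$ of $G$ by deleting the two copies of $e_0$ and adding the edges $v_0^{(1)}v_1^{(2)}$ and $v_0^{(2)}v_1^{(1)}$. Then $\sqrt{q-1}-1<R(\hat G)<\sqrt{q}-1$, and the real number $R(\hat G)$ is a root of $\lambda^3+(1-q)\lambda^2-3q\lambda+q^2-q$ lying in this interval.
   Context: For a graph $H$ of order $n$ with adjacency eigenvalues $\lambda_1\geqslant\cdots\geqslant\lambda_n$, the HL-index is $R(H)=\max\{|\lambda_{\lfloor (n+1)/2\rfloor}|,\ |\lambda_{\lceil (n+1)/2\rceil}|\}$. The incidence graph of a projective plane is the bipartite graph whose two parts are the points and the lines, a point being adjacent to a line iff it lies on it; for order $q$ it is $(q+1)$-regular with $2(q^2+q+1)$ vertices. *)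

theory Defs
  imports "Jordan_Normal_Form.Char_Poly" "HOL-Computational_Algebra.Primes"
begin

definition prime_power_nat :: "nat \<Rightarrow> bool" where
  "prime_power_nat q \<longleftrightarrow> (\<exists>p k. prime p \<and> k > 0 \<and> q = p ^ k)"

definition proj_plane_order :: "'p set \<Rightarrow> 'p set set \<Rightarrow> nat \<Rightarrow> bool" where
  "proj_plane_order P L q \<longleftrightarrow>
     finite P \<and> (\<forall>l\<in>L. l \<subseteq> P) \<and>
     (\<forall>x\<in>P. \<forall>y\<in>P. x \<noteq> y \<longrightarrow> (\<exists>!l. l \<in> L \<and> x \<in> l \<and> y \<in> l)) \<and>
     (\<forall>l\<in>L. \<forall>m\<in>L. l \<noteq> m \<longrightarrow> (\<exists>!x. x \<in> P \<and> x \<in> l \<and> x \<in> m)) \<and>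
     (\<exists>S\<subseteq>P. card S = 4 \<and> (\<forall>l\<in>L. card (S \<inter> l) \<le> 2)) \<and>
     (\<forall>l\<in>L. card l = q + 1)"

definition inc_vertices :: "'p set \<Rightarrow> 'p set set \<Rightarrow> ('p + 'p set) set" where
  "inc_vertices P L = Inl ` P \<union> Inr ` L"

definition inc_adj :: "('p + 'p set) \<Rightarrow> ('p + 'p set) \<Rightarrow> bool" where
  "inc_adj u v \<longleftrightarrow> (\<exists>x l. (u = Inl x \<and> v = Inr l \<or> u = Inr l \<and> v = Inl x) \<and> x \<in> l)"

definition double_vertices :: "'v set \<Rightarrow> (bool \<times> 'v) set" where
  "double_vertices V = UNIV \<times> V"

definition double_adj :: "('v \<Rightarrow> 'v \<Rightarrow> bool) \<Rightarrow> 'v \<Rightarrow> 'v \<Rightarrow> (bool \<times> 'v) \<Rightarrow> (bool \<times> 'v) \<Rightarrow> bool" where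
  "double_adj adj v0 v1 a b \<longleftrightarrow>
     (fst a = fst b \<and> adj (snd a) (snd b) \<and> {snd a, snd b} \<noteq> {v0, v1}) \<or>
     (fst a \<noteq> fst b \<and> (snd a = v0 \<and> snd b = v1 \<or> snd a = v1 \<and> snd b = v0))"

definition adj_matrix :: "'v set \<Rightarrow> ('v \<Rightarrow> 'v \<Rightarrow> bool) \<Rightarrow> real mat" where
  "adj_matrix V adj = (let xs = (SOME xs. distinct xs \<and> set xs = V) in
     mat (length xs) (length xs) (\<lambda>(i,j). if adj (xs ! i) (xs ! j) then 1 else 0))"

text \<open>Adjacency eigenvalues (with multiplicity), in non-increasing order: lambda_1 = entry 0.\<close>
definition adj_eigenvalues :: "'v set \<Rightarrow> ('v \<Rightarrow> 'v \<Rightarrow> bool) \<Rightarrow> real list" where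
  "adj_eigenvalues V adj = rev (sorted_list_of_multiset (proots (char_poly (adj_matrix V adj))))"

text \<open>HL-index: max of |lambda_floor((n+1)/2)| and |lambda_ceil((n+1)/2)| (1-based).\<close>
definition HL_index :: "'v set \<Rightarrow> ('v \<Rightarrow> 'v \<Rightarrow> bool) \<Rightarrow> real" where
  "HL_index V adj = (let n = card V; ev = adj_eigenvalues V adj in
     max \<bar>ev ! ((n + 1) div 2 - 1)\<bar> \<bar>ev ! ((n + 2) div 2 - 1)\<bar>)"

end

theory Submission
  imports Defs
begin


lemma det_one_minus_swap:
  fixes U :: "real mat"
  assumes U: "U \<in> carrier_mat n k" and W: "W \<in> carrier_mat k n"
  shows "det (1\<^sub>m n - U * W) = det (1\<^sub>m k - W * U)"
proof -
  define Z where "Z = four_block_mat (1\<^sub>m n) U W (1\<^sub>m k)"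
  define E where "E = four_block_mat (1\<^sub>m n) (- U) (0\<^sub>m k n) (1\<^sub>m k)"
  have UW: "U * W \<in> carrier_mat n n" and WU: "W * U \<in> carrier_mat k k" using U W by auto
  have detE: "det E = 1" unfolding E_def
    using det_four_block_mat_lower_left_zero[OF one_carrier_mat _ refl one_carrier_mat, of "- U" n k] U by simp
  have "Z * E = four_block_mat (1\<^sub>m n * 1\<^sub>m n + U * 0\<^sub>m k n) (1\<^sub>m n * (- U) + U * 1\<^sub>m k)
     (W * 1\<^sub>m n + 1\<^sub>m k * 0\<^sub>m k n) (W * (- U) + 1\<^sub>m k * 1\<^sub>m k)"
    unfolding Z_def E_def by (rule mult_four_block_mat, insert U W, auto)
  also have "\<dots> = four_block_mat (1\<^sub>m n) (0\<^sub>m n k) W (1\<^sub>m k - W * U)"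
    using U W by (intro cong_four_block_mat, auto)
  finally have ZE: "Z * E = four_block_mat (1\<^sub>m n) (0\<^sub>m n k) W (1\<^sub>m k - W * U)" .
  have "E * Z = four_block_mat (1\<^sub>m n * 1\<^sub>m n + (- U) * W) (1\<^sub>m n * U + (- U) * 1\<^sub>m k)
     (0\<^sub>m k n * 1\<^sub>m n + 1\<^sub>m k * W) (0\<^sub>m k n * U + 1\<^sub>m k * 1\<^sub>m k)"
    unfolding Z_def E_def by (rule mult_four_block_mat, insert U W, auto)
  also have "\<dots> = four_block_mat (1\<^sub>m n - U * W) (0\<^sub>m n k) W (1\<^sub>m k)"
    using U W by (intro cong_four_block_mat, auto)
  finally have EZ: "E * Z = four_block_mat (1\<^sub>m n - U * W) (0\<^sub>m n k) W (1\<^sub>m k)" .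
  have Zc: "Z \<in> carrier_mat (n+k) (n+k)" and Ec: "E \<in> carrier_mat (n+k) (n+k)"
    unfolding Z_def E_def using U W by auto
  have "det (Z * E) = det (1\<^sub>m k - W * U)" unfolding ZE
    using det_four_block_mat_upper_right_zero[OF one_carrier_mat refl W, of "1\<^sub>m k - W * U"] WU by (simp add: minus_carrier_mat)
  moreover have "det (E * Z) = det (1\<^sub>m n - U * W)" unfolding EZ
    using det_four_block_mat_upper_right_zero[of "1\<^sub>m n - U * W" n, OF _ refl W one_carrier_mat] UW by (simp add: minus_carrier_mat)
  moreover have "det (Z * E) = det (E * Z)"
    using det_mult[OF Zc Ec] det_mult[OF Ec Zc] by simp
  ultimately show ?thesis by simp
qed

lemma det_sylvester:
  fixes U :: "real mat"
  assumes U: "U \<in> carrier_mat n k" and W: "W \<in> carrier_mat k n" and y: "y \<noteq> 0"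
  shows "y ^ k * det (y \<cdot>\<^sub>m 1\<^sub>m n - U * W) = y ^ n * det (y \<cdot>\<^sub>m 1\<^sub>m k - W * U)"
proof -
  let ?U = "(1 / y) \<cdot>\<^sub>m U"
  have U': "?U \<in> carrier_mat n k" using U by auto
  have e1: "y \<cdot>\<^sub>m 1\<^sub>m n - U * W = y \<cdot>\<^sub>m (1\<^sub>m n - ?U * W)"
    using U W y by (intro eq_matI, auto simp: field_simps)
  have e2: "y \<cdot>\<^sub>m 1\<^sub>m k - W * U = y \<cdot>\<^sub>m (1\<^sub>m k - W * ?U)"
    using U W y by (intro eq_matI, auto simp: field_simps)
  have "det (y \<cdot>\<^sub>m 1\<^sub>m n - U * W) = y ^ n * det (1\<^sub>m n - ?U * W)" unfolding e1 using U W by simp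
  moreover have "det (y \<cdot>\<^sub>m 1\<^sub>m k - W * U) = y ^ k * det (1\<^sub>m k - W * ?U)" unfolding e2 using U W by simp
  moreover note det_one_minus_swap[OF U' W]
  ultimately show ?thesis by simp
qed

lemma det_orth_pieces:
  fixes A :: "real mat"
  assumes A: "A \<in> carrier_mat n n" and B: "B \<in> carrier_mat n n" and AB: "A * B = 0\<^sub>m n n"
  shows "y ^ n * det (y \<cdot>\<^sub>m 1\<^sub>m n - (A + B)) = det (y \<cdot>\<^sub>m 1\<^sub>m n - A) * det (y \<cdot>\<^sub>m 1\<^sub>m n - B)"
proof -
  have "(y \<cdot>\<^sub>m 1\<^sub>m n - A) * (y \<cdot>\<^sub>m 1\<^sub>m n - B) = y \<cdot>\<^sub>m (y \<cdot>\<^sub>m 1\<^sub>m n - (A + B))"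
  proof -
    have "(y \<cdot>\<^sub>m 1\<^sub>m n - A) * (y \<cdot>\<^sub>m 1\<^sub>m n - B) = (y \<cdot>\<^sub>m 1\<^sub>m n) * (y \<cdot>\<^sub>m 1\<^sub>m n - B) - A * (y \<cdot>\<^sub>m 1\<^sub>m n - B)"
      using A B by (intro minus_mult_distrib_mat, auto)
    also have "(y \<cdot>\<^sub>m 1\<^sub>m n) * (y \<cdot>\<^sub>m 1\<^sub>m n - B) = y \<cdot>\<^sub>m (y \<cdot>\<^sub>m 1\<^sub>m n - B)"
      using B by (subst mult_smult_assoc_mat[of _ n n _ n], auto)
    also have "A * (y \<cdot>\<^sub>m 1\<^sub>m n - B) = A * (y \<cdot>\<^sub>m 1\<^sub>m n) - A * B"
      using A B by (intro mult_minus_distrib_mat, auto)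
    also have "A * (y \<cdot>\<^sub>m 1\<^sub>m n) = y \<cdot>\<^sub>m A" using A by (subst mult_smult_distrib[of _ n n _ n], auto)
    finally show ?thesis unfolding AB using A B by (intro eq_matI, auto simp: algebra_simps)
  qed
  hence "det ((y \<cdot>\<^sub>m 1\<^sub>m n - A) * (y \<cdot>\<^sub>m 1\<^sub>m n - B)) = y ^ n * det (y \<cdot>\<^sub>m 1\<^sub>m n - (A + B))"
    using A B by simp
  moreover have "det ((y \<cdot>\<^sub>m 1\<^sub>m n - A) * (y \<cdot>\<^sub>m 1\<^sub>m n - B)) = det (y \<cdot>\<^sub>m 1\<^sub>m n - A) * det (y \<cdot>\<^sub>m 1\<^sub>m n - B)"
    using A B by (intro det_mult, auto)
  ultimately show ?thesis by simp
qed


lemma det_mat2: "det (mat 2 2 f) = f (0,0) * f (1,1) - f (0,1) * (f (1,0) :: real)"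
proof -
  have "det (mat 2 2 f) = (\<Sum>j<2. mat 2 2 f $$ (0,j) * cofactor (mat 2 2 f) 0 j)"
    by (rule laplace_expansion_row, auto)
  also have "\<dots> = f (0,0) * f (1,1) - f (0,1) * f (1,0)"
    by (simp add: cofactor_def mat_delete_def det_single numeral_2_eq_2 lessThan_Suc)
  finally show ?thesis .
qed

lemma det_mat3: "det (mat 3 3 f) =
   f (0,0) * (f (1,1) * f (2,2) - f (1,2) * f (2,1))
 - f (0,1) * (f (1,0) * f (2,2) - f (1,2) * f (2,0))
 + f (0,2) * (f (1,0) * f (2,1) - f (1,1) * (f (2,0) :: real))"
proof -
  have "det (mat 3 3 f) = (\<Sum>j<3. mat 3 3 f $$ (0,j) * cofactor (mat 3 3 f) 0 j)"
    by (rule laplace_expansion_row, auto)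
  also have "\<dots> = f (0,0) * (f (1,1) * f (2,2) - f (1,2) * f (2,1))
 - f (0,1) * (f (1,0) * f (2,2) - f (1,2) * f (2,0))
 + f (0,2) * (f (1,0) * f (2,1) - f (1,1) * (f (2,0) :: real))"
  proof -
    have d: "mat_delete (mat 3 3 f) 0 j = mat 2 2 (\<lambda>(i',j'). f (Suc i', if j' < j then j' else Suc j'))" for j
      unfolding mat_delete_def by (intro eq_matI, auto)
    have s3: "(\<Sum>j<3. g j) = g 0 + g 1 + g (2::nat)" for g :: "nat \<Rightarrow> real"
      by (simp add: numeral_3_eq_3 numeral_2_eq_2)
    have c0: "cofactor (mat 3 3 f) 0 0 = f (1,1) * f (2,2) - f (1,2) * f (2,1)"
      unfolding cofactor_def d det_mat2 by (simp add: numeral_2_eq_2)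
    have c1: "cofactor (mat 3 3 f) 0 1 = - (f (1,0) * f (2,2) - f (1,2) * f (2,0))"
      unfolding cofactor_def d det_mat2 by (simp add: numeral_2_eq_2)
    have c2: "cofactor (mat 3 3 f) 0 2 = f (1,0) * f (2,1) - f (1,1) * f (2,0)"
      unfolding cofactor_def d det_mat2 by (simp add: numeral_2_eq_2)
    show ?thesis unfolding s3 c0 c1 c2 by (simp add: algebra_simps)

  qed
  finally show ?thesis .
qed


context
  fixes P :: "'p set" and L :: "'p set set" and q :: nat
  assumes pp: "proj_plane_order P L q"
begin

lemmas ppd = pp[unfolded proj_plane_order_def]
lemma pp_finP: "finite P" using ppd by (rule conjunct1)
lemma pp_sub: "l \<in> L \<Longrightarrow> l \<subseteq> P" using ppd[THEN conjunct2, THEN conjunct1] by (rule bspec)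
lemma pp_card_line: "l \<in> L \<Longrightarrow> card l = q + 1"
  using ppd[THEN conjunct2, THEN conjunct2, THEN conjunct2, THEN conjunct2, THEN conjunct2] by (rule bspec)
lemma pp_finL: "finite L"
proof -
  have "L \<subseteq> Pow P" using pp_sub by auto
  moreover have "finite (Pow P)" using pp_finP by simp
  ultimately show ?thesis by (rule finite_subset)
qed
lemma pp_fin_line: "l \<in> L \<Longrightarrow> finite l" using pp_sub pp_finP by (rule finite_subset)

lemma pp_two_points: "x \<in> P \<Longrightarrow> y \<in> P \<Longrightarrow> x \<noteq> y \<Longrightarrow> \<exists>!l. l \<in> L \<and> x \<in> l \<and> y \<in> l"
  using ppd[THEN conjunct2, THEN conjunct2, THEN conjunct1] by simp
lemma pp_two_lines: "l \<in> L \<Longrightarrow> m \<in> L \<Longrightarrow> l \<noteq> m \<Longrightarrow> \<exists>!x. x \<in> P \<and> x \<in> l \<and> x \<in> m"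
  using ppd[THEN conjunct2, THEN conjunct2, THEN conjunct2, THEN conjunct1] by simp

lemma pp_uniq_pt: assumes "l \<in> L" "m \<in> L" "l \<noteq> m" "x \<in> l" "x \<in> m" "y \<in> l" "y \<in> m" shows "x = y"
proof -
  have ex: "\<exists>!x. x \<in> P \<and> x \<in> l \<and> x \<in> m" using pp_two_lines assms(1-3) by simp
  have "x \<in> P" "y \<in> P" using pp_sub assms by auto
  thus ?thesis using ex assms(4-7) by (metis (no_types, lifting))
qed

lemma pp_quad: "\<exists>S\<subseteq>P. card S = 4 \<and> (\<forall>l\<in>L. card (S \<inter> l) \<le> 2)"
  using ppd[THEN conjunct2, THEN conjunct2, THEN conjunct2, THEN conjunct2, THEN conjunct1] .

lemma pp_avoid: assumes x: "x \<in> P" shows "\<exists>m\<in>L. x \<notin> m"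
proof (rule ccontr)
  assume all: "\<not> (\<exists>m\<in>L. x \<notin> m)"
  obtain S where S: "S \<subseteq> P" "card S = 4" and Sl: "\<forall>l\<in>L. card (S \<inter> l) \<le> 2" using pp_quad by auto
  have fS: "finite S" using S pp_finP finite_subset by blast
  have "card (S - {x}) \<ge> 3" using S fS by (simp add: card_Diff_singleton_if)
  then obtain T where T: "T \<subseteq> S - {x}" "card T = 3" by (meson obtain_subset_with_card_n)
  then obtain a b c where abc: "T = {a,b,c}" "a \<noteq> b" "b \<noteq> c" "a \<noteq> c" by (auto simp: card_3_iff)
  have inP: "a \<in> P" "b \<in> P" "c \<in> P" and nx: "a \<noteq> x" using T abc S by auto
  obtain lab where lab: "lab \<in> L" "a \<in> lab" "b \<in> lab" using pp_two_points[OF inP(1,2) abc(2)] by auto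
  obtain lac where lac: "lac \<in> L" "a \<in> lac" "c \<in> lac" using pp_two_points[OF inP(1,3) abc(4)] by auto
  show False
  proof (cases "lab = lac")
    case True
    have "{a,b,c} \<subseteq> S \<inter> lab" using T abc lab lac True by auto
    hence "card {a,b,c} \<le> card (S \<inter> lab)" using fS by (intro card_mono, auto)
    thus False using Sl lab abc by auto
  next
    case False
    have "x \<in> lab" "x \<in> lac" using all lab lac by auto
    thus False using pp_uniq_pt[OF lab(1) lac(1) False, of x a] lab lac nx by auto
  qed
qed

lemma pp_lines_through: assumes x: "x \<in> P" shows "card {l\<in>L. x \<in> l} = q + 1"
proof -
  obtain m where m: "m \<in> L" "x \<notin> m" using pp_avoid[OF x] by auto
  define g where "g y = (THE l. l \<in> L \<and> x \<in> l \<and> y \<in> l)" for y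
  have g: "g y \<in> L \<and> x \<in> g y \<and> y \<in> g y" if "y \<in> m" for y
  proof -
    have "y \<in> P" "x \<noteq> y" using that m pp_sub by auto
    from theI'[OF pp_two_points[OF x this(1) this(2)]] show ?thesis unfolding g_def .
  qed
  have "inj_on g m"
  proof
    fix y1 y2 assume y: "y1 \<in> m" "y2 \<in> m" "g y1 = g y2"
    have "g y1 \<noteq> m" using g[OF y(1)] m by auto
    thus "y1 = y2" using pp_uniq_pt[of "g y1" m y1 y2] g[OF y(1)] g[OF y(2)] y m by auto
  qed
  moreover have "g ` m = {l\<in>L. x \<in> l}"
  proof
    show "g ` m \<subseteq> {l\<in>L. x \<in> l}" using g by auto
    show "{l\<in>L. x \<in> l} \<subseteq> g ` m"
    proof
      fix l assume l: "l \<in> {l\<in>L. x \<in> l}"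
      hence lm: "l \<noteq> m" using m by auto
      then obtain y where y: "y \<in> P" "y \<in> l" "y \<in> m" using pp_two_lines[of l m] l m by auto
      have "x \<noteq> y" using m y by auto
      moreover have "g y \<in> L \<and> x \<in> g y \<and> y \<in> g y" using g[OF y(3)] .
      ultimately have "g y = l" using pp_two_points[OF x y(1)] l y by (metis (no_types, lifting) mem_Collect_eq)
      thus "l \<in> g ` m" using y by auto
    qed
  qed
  ultimately have "card {l\<in>L. x \<in> l} = card m" using card_image by metis
  thus ?thesis using pp_card_line[OF m(1)] by simp
qed

lemma pp_card_P: "card P = q * q + q + 1"
proof -
  obtain S where S: "S \<subseteq> P" "card S = 4" using pp_quad by auto
  then obtain x where x: "x \<in> P" by (metis card.empty ex_in_conv subset_eq zero_neq_numeral)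
  let ?Lx = "{l\<in>L. x \<in> l}"
  have PU: "P = {x} \<union> (\<Union>l\<in>?Lx. l - {x})"
  proof
    show "P \<subseteq> {x} \<union> (\<Union>l\<in>?Lx. l - {x})"
    proof
      fix y assume y: "y \<in> P"
      show "y \<in> {x} \<union> (\<Union>l\<in>?Lx. l - {x})"
      proof (cases "y = x")
        case False
        then obtain l where "l \<in> L" "x \<in> l" "y \<in> l" using pp_two_points[OF x y] by auto
        thus ?thesis using False by auto
      qed auto
    qed
    show "{x} \<union> (\<Union>l\<in>?Lx. l - {x}) \<subseteq> P" using x pp_sub by auto
  qed
  have fin: "finite ?Lx" using pp_finL by auto
  have disj: "\<forall>l1\<in>?Lx. \<forall>l2\<in>?Lx. l1 \<noteq> l2 \<longrightarrow> (l1 - {x}) \<inter> (l2 - {x}) = {}"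
  proof (intro ballI impI)
    fix l1 l2 assume a: "l1 \<in> ?Lx" "l2 \<in> ?Lx" "l1 \<noteq> l2"
    show "(l1 - {x}) \<inter> (l2 - {x}) = {}"
    proof (rule ccontr)
      assume "(l1 - {x}) \<inter> (l2 - {x}) \<noteq> {}"
      then obtain y where "y \<in> l1" "y \<in> l2" "y \<noteq> x" by auto
      with pp_uniq_pt[of l1 l2 x y] a show False by auto
    qed
  qed
  have cU: "card (\<Union>l\<in>?Lx. l - {x}) = (\<Sum>l\<in>?Lx. card (l - {x}))"
    by (rule card_UN_disjoint[OF fin], insert pp_fin_line disj, auto)
  also have "\<dots> = (\<Sum>l\<in>?Lx. q)" using pp_card_line pp_fin_line by (intro sum.cong, auto)
  also have "\<dots> = (q+1) * q" using pp_lines_through[OF x] by simp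
  finally have cU': "card (\<Union>l\<in>?Lx. l - {x}) = (q+1) * q" .
  have "card P = card ({x} \<union> (\<Union>l\<in>?Lx. l - {x}))" using PU by simp
  also have "\<dots> = 1 + (q+1) * q"
    by (subst card_Un_disjoint, insert pp_fin_line fin cU', auto)
  finally show ?thesis by (simp add: algebra_simps)
qed

lemma pp_L_ne: "L \<noteq> {}"
proof -
  obtain S where S: "S \<subseteq> P" "card S = 4" using pp_quad by auto
  have "card S \<ge> 2" using S by simp
  then obtain T where "T \<subseteq> S" "card T = 2" by (meson obtain_subset_with_card_n)
  then obtain a b where "a \<in> P" "b \<in> P" "a \<noteq> b" using S by (auto simp: card_2_iff)
  thus ?thesis using pp_two_points by blast
qed

lemma pp_card_L: "card L = q * q + q + 1"
proof -
  obtain l0 where l0: "l0 \<in> L" using pp_L_ne by auto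
  let ?F = "\<lambda>y. {l\<in>L. y \<in> l} - {l0}"
  have LU: "L = {l0} \<union> (\<Union>y\<in>l0. ?F y)"
  proof
    show "L \<subseteq> {l0} \<union> (\<Union>y\<in>l0. ?F y)"
    proof
      fix l assume l: "l \<in> L"
      show "l \<in> {l0} \<union> (\<Union>y\<in>l0. ?F y)"
      proof (cases "l = l0")
        case False
        then obtain y where "y \<in> l" "y \<in> l0" using pp_two_lines[OF l l0] by auto
        thus ?thesis using False l by auto
      qed auto
    qed
    show "{l0} \<union> (\<Union>y\<in>l0. ?F y) \<subseteq> L" using l0 by auto
  qed
  have fin: "finite l0" using pp_fin_line l0 by auto
  have disj: "\<forall>y1\<in>l0. \<forall>y2\<in>l0. y1 \<noteq> y2 \<longrightarrow> ?F y1 \<inter> ?F y2 = {}"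
  proof (intro ballI impI)
    fix y1 y2 assume a: "y1 \<in> l0" "y2 \<in> l0" "y1 \<noteq> y2"
    show "?F y1 \<inter> ?F y2 = {}"
    proof (rule ccontr)
      assume "?F y1 \<inter> ?F y2 \<noteq> {}"
      then obtain l where "l \<in> L" "y1 \<in> l" "y2 \<in> l" "l \<noteq> l0" by auto
      with pp_uniq_pt[of l l0 y1 y2] a l0 show False by auto
    qed
  qed
  have cF: "card (?F y) = q" if "y \<in> l0" for y
  proof -
    have "y \<in> P" using that l0 pp_sub by auto
    thus ?thesis using pp_lines_through[of y] that l0 pp_finL by (simp add: card_Diff_singleton_if)
  qed
  have cU: "card (\<Union>y\<in>l0. ?F y) = (\<Sum>y\<in>l0. card (?F y))"
    by (rule card_UN_disjoint[OF fin], insert pp_finL disj, auto)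
  also have "\<dots> = (\<Sum>y\<in>l0. q)" using cF by (intro sum.cong, auto)
  also have "\<dots> = (q+1) * q" using pp_card_line[OF l0] by simp
  finally have cU': "card (\<Union>y\<in>l0. ?F y) = (q+1) * q" .
  have "card L = card ({l0} \<union> (\<Union>y\<in>l0. ?F y))" using LU by simp
  also have "\<dots> = 1 + (q+1) * q"
    by (subst card_Un_disjoint, insert pp_finL fin cU', auto)
  finally show ?thesis by (simp add: algebra_simps)
qed

lemma pp_common_lines: assumes "x \<in> P" "y \<in> P"
  shows "card {l\<in>L. x \<in> l \<and> y \<in> l} = (if x = y then q + 1 else 1)"
proof (cases "x = y")
  case True thus ?thesis using pp_lines_through[OF assms(1)] by simp
next
  case False
  then obtain l where l: "l \<in> L \<and> x \<in> l \<and> y \<in> l" and u: "\<And>l'. l' \<in> L \<and> x \<in> l' \<and> y \<in> l' \<Longrightarrow> l' = l"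
    using pp_two_points[OF assms False] by metis
  have "{l\<in>L. x \<in> l \<and> y \<in> l} = {l}" using l u by blast
  thus ?thesis using False by simp
qed

lemma pp_common_points: assumes "l \<in> L" "m \<in> L"
  shows "card {x\<in>P. x \<in> l \<and> x \<in> m} = (if l = m then q + 1 else 1)"
proof (cases "l = m")
  case True
  have "{x\<in>P. x \<in> l \<and> x \<in> m} = l" using True pp_sub assms by auto
  thus ?thesis using True pp_card_line assms by simp
next
  case False
  then obtain x where x: "x \<in> P \<and> x \<in> l \<and> x \<in> m" and u: "\<And>y. y \<in> P \<and> y \<in> l \<and> y \<in> m \<Longrightarrow> y = x"
    using pp_two_lines[OF assms False] by metis
  have "{x\<in>P. x \<in> l \<and> x \<in> m} = {x}" using x u by blast
  thus ?thesis using False by simp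
qed

end


lemma sumV: assumes "finite P" "finite L"
  shows "(\<Sum>t\<in>inc_vertices P L. h t) = (\<Sum>x\<in>P. h (Inl x)) + (\<Sum>l\<in>L. h (Inr l))"
proof -
  have "(\<Sum>t\<in>inc_vertices P L. h t) = (\<Sum>t\<in>Inl ` P. h t) + (\<Sum>t\<in>Inr ` L. h t)"
    unfolding inc_vertices_def by (rule sum.union_disjoint, insert assms, auto)
  also have "\<dots> = (\<Sum>x\<in>P. h (Inl x)) + (\<Sum>l\<in>L. h (Inr l))"
    by (subst sum.reindex, simp, subst sum.reindex, auto)
  finally show ?thesis .
qed

definition Aw :: "'p + 'p set \<Rightarrow> 'p + 'p set \<Rightarrow> real" where
  "Aw w z = of_bool (inc_adj w z)"

lemma inc_adj_simps[simp]:
  "inc_adj (Inl x) (Inr l) = (x \<in> l)" "inc_adj (Inr l) (Inl x) = (x \<in> l)"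
  "\<not> inc_adj (Inl x) (Inl y)" "\<not> inc_adj (Inr l) (Inr m)"
  unfolding inc_adj_def by auto

context
  fixes P :: "'p set" and L :: "'p set set" and q :: nat
  assumes pp: "proj_plane_order P L q"
begin

lemma A2: assumes w: "w \<in> inc_vertices P L" and z: "z \<in> inc_vertices P L"
  shows "(\<Sum>t\<in>inc_vertices P L. Aw w t * Aw t z) = real q * of_bool (w = z)
     + of_bool (w \<in> Inl ` P \<and> z \<in> Inl ` P) + of_bool (w \<in> Inr ` L \<and> z \<in> Inr ` L)"
proof -
  note fin = pp_finP[OF pp] pp_finL[OF pp]
  from w z consider (ptpt) x y where "x \<in> P" "y \<in> P" "w = Inl x" "z = Inl y"
    | (pl) x m where "x \<in> P" "m \<in> L" "w = Inl x" "z = Inr m"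
    | (lp) l y where "l \<in> L" "y \<in> P" "w = Inr l" "z = Inl y"
    | (ll) l m where "l \<in> L" "m \<in> L" "w = Inr l" "z = Inr m"
    unfolding inc_vertices_def by auto
  thus ?thesis
  proof cases
    case ptpt
    have "(\<Sum>t\<in>inc_vertices P L. Aw w t * Aw t z) = (\<Sum>l\<in>L. of_bool (x \<in> l \<and> y \<in> l))"
      unfolding sumV[OF fin] using ptpt by (simp add: Aw_def of_bool_conj)
    also have "\<dots> = real (card {l\<in>L. x \<in> l \<and> y \<in> l})"
    proof -
      have "{l\<in>L. x \<in> l \<and> y \<in> l} = L \<inter> {l. x \<in> l \<and> y \<in> l}" by blast
      thus ?thesis using fin by (simp add: of_bool_def sum.If_cases)
    qed
    also have "\<dots> = real q * of_bool (w = z) + 1"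
      using pp_common_lines[OF pp ptpt(1,2)] ptpt by auto
    finally show ?thesis using ptpt by auto
  next
    case ll
    have "(\<Sum>t\<in>inc_vertices P L. Aw w t * Aw t z) = (\<Sum>x\<in>P. of_bool (x \<in> l \<and> x \<in> m))"
      unfolding sumV[OF fin] using ll by (simp add: Aw_def of_bool_conj)
    also have "\<dots> = real (card {x\<in>P. x \<in> l \<and> x \<in> m})"
    proof -
      have "{x\<in>P. x \<in> l \<and> x \<in> m} = P \<inter> {x. x \<in> l \<and> x \<in> m}" by blast
      thus ?thesis using fin by (simp add: of_bool_def sum.If_cases)
    qed
    also have "\<dots> = real q * of_bool (w = z) + 1"
      using pp_common_points[OF pp ll(1,2)] ll by auto
    finally show ?thesis using ll by auto
  next
    case pl
    thus ?thesis unfolding sumV[OF fin] by (auto simp: Aw_def)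
  next
    case lp
    thus ?thesis unfolding sumV[OF fin] by (auto simp: Aw_def)
  qed
qed

end

definition Mf :: "'p + 'p set \<Rightarrow> 'p + 'p set \<Rightarrow> (bool \<times> ('p + 'p set)) \<Rightarrow> (bool \<times> ('p + 'p set)) \<Rightarrow> real" where
  "Mf zv0 zv1 a b = of_bool (double_adj inc_adj zv0 zv1 a b)"

definition vv :: "'v set \<Rightarrow> real \<Rightarrow> bool \<times> 'v \<Rightarrow> real" where
  "vv S s a = (if snd a \<in> S then (if fst a then 1 else s) else 0)"

definition Ew :: "'v \<Rightarrow> 'v \<Rightarrow> 'v \<Rightarrow> 'v \<Rightarrow> real" where
  "Ew zv0 zv1 w z = of_bool ((w = zv0 \<and> z = zv1) \<or> (w = zv1 \<and> z = zv0))"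

context
  fixes P :: "'p set" and L :: "'p set set" and q :: nat and p0 :: 'p and l0 :: "'p set"
  assumes pp: "proj_plane_order P L q" and l0: "l0 \<in> L" and p0: "p0 \<in> l0"
begin

abbreviation "zV \<equiv> inc_vertices P L"
abbreviation "zv0 \<equiv> (Inl p0 :: 'p + 'p set)"
abbreviation "zv1 \<equiv> (Inr l0 :: 'p + 'p set)"
abbreviation "zC0 \<equiv> (Inr ` {l\<in>L. p0 \<in> l} :: ('p + 'p set) set)"
abbreviation "zC1 \<equiv> (Inl ` l0 :: ('p + 'p set) set)"

lemma p0P: "p0 \<in> P" using pp_sub[OF pp l0] p0 by auto
lemma v0V: "zv0 \<in> zV" using p0P unfolding inc_vertices_def by auto
lemma v1V: "zv1 \<in> zV" using l0 unfolding inc_vertices_def by auto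
lemma finV: "finite zV" using pp_finP[OF pp] pp_finL[OF pp] unfolding inc_vertices_def by auto

lemma Aw_v0: "w \<in> zV \<Longrightarrow> Aw w zv0 = of_bool (w \<in> zC0)"
  unfolding inc_vertices_def Aw_def by auto
lemma Aw_v0': "w \<in> zV \<Longrightarrow> Aw zv0 w = of_bool (w \<in> zC0)"
  unfolding inc_vertices_def Aw_def by auto
lemma Aw_v1: "w \<in> zV \<Longrightarrow> Aw w zv1 = of_bool (w \<in> zC1)"
  using pp_sub[OF pp l0] unfolding inc_vertices_def Aw_def by auto
lemma Aw_v1': "w \<in> zV \<Longrightarrow> Aw zv1 w = of_bool (w \<in> zC1)"
  using pp_sub[OF pp l0] unfolding inc_vertices_def Aw_def by auto

lemma Ew_split: "Ew zv0 zv1 t z = (if t = zv0 then of_bool (z = zv1) else 0) + (if t = zv1 then of_bool (z = zv0) else 0)"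
  unfolding Ew_def by auto
lemma Ew_split': "Ew zv0 zv1 w t = (if t = zv1 then of_bool (w = zv0) else 0) + (if t = zv0 then of_bool (w = zv1) else 0)"
  unfolding Ew_def by auto

lemma AE: assumes "w \<in> zV"
  shows "(\<Sum>t\<in>zV. Aw w t * Ew zv0 zv1 t z) = of_bool (w \<in> zC0 \<and> z = zv1) + of_bool (w \<in> zC1 \<and> z = zv0)"
proof -
  have "(\<Sum>t\<in>zV. Aw w t * Ew zv0 zv1 t z) = (\<Sum>t\<in>zV. (if t = zv0 then Aw w t * of_bool (z = zv1) else 0))
     + (\<Sum>t\<in>zV. (if t = zv1 then Aw w t * of_bool (z = zv0) else 0))"
    by (subst sum.distrib[symmetric], rule sum.cong[OF refl], auto simp: Ew_def)
  also have "\<dots> = Aw w zv0 * of_bool (z = zv1) + Aw w zv1 * of_bool (z = zv0)"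
    using finV v0V v1V by simp
  finally show ?thesis using Aw_v0[OF assms] Aw_v1[OF assms] by (simp add: of_bool_conj)
qed

lemma EA: assumes "z \<in> zV"
  shows "(\<Sum>t\<in>zV. Ew zv0 zv1 w t * Aw t z) = of_bool (w = zv0 \<and> z \<in> zC1) + of_bool (w = zv1 \<and> z \<in> zC0)"
proof -
  have "(\<Sum>t\<in>zV. Ew zv0 zv1 w t * Aw t z) = (\<Sum>t\<in>zV. (if t = zv1 then of_bool (w = zv0) * Aw t z else 0))
     + (\<Sum>t\<in>zV. (if t = zv0 then of_bool (w = zv1) * Aw t z else 0))"
    by (subst sum.distrib[symmetric], rule sum.cong[OF refl], auto simp: Ew_def)
  also have "\<dots> = of_bool (w = zv0) * Aw zv1 z + of_bool (w = zv1) * Aw zv0 z"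
    using finV v0V v1V by simp
  finally show ?thesis using Aw_v0'[OF assms] Aw_v1'[OF assms] by (simp add: of_bool_conj)
qed

lemma EE: "(\<Sum>t\<in>zV. Ew zv0 zv1 w t * Ew zv0 zv1 t z) = of_bool (w = zv0 \<and> z = zv0) + of_bool (w = zv1 \<and> z = zv1)"
proof -
  have "(\<Sum>t\<in>zV. Ew zv0 zv1 w t * Ew zv0 zv1 t z) = (\<Sum>t\<in>zV. (if t = zv1 then of_bool (w = zv0) * of_bool (z = zv0) else 0))
     + (\<Sum>t\<in>zV. (if t = zv0 then of_bool (w = zv1) * of_bool (z = zv1) else 0))"
    by (subst sum.distrib[symmetric], rule sum.cong[OF refl], auto simp: Ew_def)
  also have "\<dots> = of_bool (w = zv0) * of_bool (z = zv0) + of_bool (w = zv1) * of_bool (z = zv1)"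
    using finV v0V v1V by simp
  finally show ?thesis by (simp add: of_bool_conj)
qed


lemma Mf_dec: "Mf zv0 zv1 a b = (if fst a = fst b then Aw (snd a) (snd b) - Ew zv0 zv1 (snd a) (snd b) else Ew zv0 zv1 (snd a) (snd b))"
  using p0 unfolding Mf_def double_adj_def Aw_def Ew_def by (auto simp: doubleton_eq_iff)

lemma sum_AE_expand: "(\<Sum>t\<in>zV. (Aw w t - Ew zv0 zv1 w t) * (Aw t z - Ew zv0 zv1 t z)) =
   (\<Sum>t\<in>zV. Aw w t * Aw t z) - (\<Sum>t\<in>zV. Aw w t * Ew zv0 zv1 t z) - (\<Sum>t\<in>zV. Ew zv0 zv1 w t * Aw t z) + (\<Sum>t\<in>zV. Ew zv0 zv1 w t * Ew zv0 zv1 t z)"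
  by (simp add: algebra_simps sum.distrib sum_subtractf)
lemma sum_AE_expand2: "(\<Sum>t\<in>zV. (Aw w t - Ew zv0 zv1 w t) * Ew zv0 zv1 t z) =
   (\<Sum>t\<in>zV. Aw w t * Ew zv0 zv1 t z) - (\<Sum>t\<in>zV. Ew zv0 zv1 w t * Ew zv0 zv1 t z)"
  by (simp add: algebra_simps sum.distrib sum_subtractf)
lemma sum_AE_expand3: "(\<Sum>t\<in>zV. Ew zv0 zv1 w t * (Aw t z - Ew zv0 zv1 t z)) =
   (\<Sum>t\<in>zV. Ew zv0 zv1 w t * Aw t z) - (\<Sum>t\<in>zV. Ew zv0 zv1 w t * Ew zv0 zv1 t z)"
  by (simp add: algebra_simps sum.distrib sum_subtractf)

lemma Msq_sum: "(\<Sum>c\<in>UNIV \<times> zV. Mf zv0 zv1 (\<alpha>, w) c * Mf zv0 zv1 c (\<beta>, z)) =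
  (if \<alpha> = \<beta> then (\<Sum>t\<in>zV. Aw w t * Aw t z) - (\<Sum>t\<in>zV. Aw w t * Ew zv0 zv1 t z) - (\<Sum>t\<in>zV. Ew zv0 zv1 w t * Aw t z) + 2 * (\<Sum>t\<in>zV. Ew zv0 zv1 w t * Ew zv0 zv1 t z)
   else (\<Sum>t\<in>zV. Aw w t * Ew zv0 zv1 t z) + (\<Sum>t\<in>zV. Ew zv0 zv1 w t * Aw t z) - 2 * (\<Sum>t\<in>zV. Ew zv0 zv1 w t * Ew zv0 zv1 t z))"
proof -
  have "(\<Sum>c\<in>UNIV \<times> zV. Mf zv0 zv1 (\<alpha>, w) c * Mf zv0 zv1 c (\<beta>, z)) =
    (\<Sum>\<gamma>\<in>UNIV. \<Sum>t\<in>zV. Mf zv0 zv1 (\<alpha>, w) (\<gamma>, t) * Mf zv0 zv1 (\<gamma>, t) (\<beta>, z))"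
    by (subst sum.cartesian_product, simp add: case_prod_beta)
  also have "\<dots> = (\<Sum>t\<in>zV. Mf zv0 zv1 (\<alpha>, w) (True, t) * Mf zv0 zv1 (True, t) (\<beta>, z))
     + (\<Sum>t\<in>zV. Mf zv0 zv1 (\<alpha>, w) (False, t) * Mf zv0 zv1 (False, t) (\<beta>, z))"
    by (simp add: UNIV_bool)
  finally show ?thesis
    by (cases \<alpha>; cases \<beta>; simp add: Mf_dec sum_AE_expand sum_AE_expand2 sum_AE_expand3)
qed


definition Tker :: "bool \<times> ('p + 'p set) \<Rightarrow> bool \<times> ('p + 'p set) \<Rightarrow> real" where
  "Tker a b = vv (Inl ` P) 1 a * vv (Inl ` P) 1 b / 2 + vv (Inr ` L) 1 a * vv (Inr ` L) 1 b / 2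
   + (vv (Inl ` P) (-1) a * vv (Inl ` P) (-1) b / 2 - vv zC1 (-1) a * vv {zv0} (-1) b
      + vv {zv0} (-1) a * (- vv zC1 (-1) b + 2 * vv {zv0} (-1) b))
   + (vv (Inr ` L) (-1) a * vv (Inr ` L) (-1) b / 2 - vv zC0 (-1) a * vv {zv1} (-1) b
      + vv {zv1} (-1) a * (- vv zC0 (-1) b + 2 * vv {zv1} (-1) b))"

lemma Msq_closed: assumes w: "w \<in> zV" and z: "z \<in> zV"
  shows "(\<Sum>c\<in>UNIV \<times> zV. Mf zv0 zv1 (\<alpha>, w) c * Mf zv0 zv1 c (\<beta>, z)) = real q * of_bool ((\<alpha>, w) = (\<beta>, z)) + Tker (\<alpha>, w) (\<beta>, z)"
proof -
  have l0P: "l0 \<subseteq> P" using pp_sub[OF pp l0] .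
  note eqs = Msq_sum A2[OF pp w z] AE[OF w] EA[OF z] EE
  from w z consider (ptpt) x y where "x \<in> P" "y \<in> P" "w = Inl x" "z = Inl y"
    | (pl) x m where "x \<in> P" "m \<in> L" "w = Inl x" "z = Inr m"
    | (lp) l y where "l \<in> L" "y \<in> P" "w = Inr l" "z = Inl y"
    | (ll) l m where "l \<in> L" "m \<in> L" "w = Inr l" "z = Inr m"
    unfolding inc_vertices_def by auto
  thus ?thesis
  proof cases
    case ptpt
    show ?thesis unfolding eqs Tker_def using ptpt l0P p0P
      by (cases \<alpha>; cases \<beta>; auto simp: vv_def)
  next
    case pl
    show ?thesis unfolding eqs Tker_def using pl l0P p0P l0
      by (cases \<alpha>; cases \<beta>; auto simp: vv_def)
  next
    case lp
    show ?thesis unfolding eqs Tker_def using lp l0P p0P l0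
      by (cases \<alpha>; cases \<beta>; auto simp: vv_def)
  next
    case ll
    show ?thesis unfolding eqs Tker_def using ll l0P p0P l0
      by (cases \<alpha>; cases \<beta>; auto simp: vv_def)
  qed
qed

end


definition kmat :: "'a list \<Rightarrow> ('a \<Rightarrow> 'a \<Rightarrow> real) \<Rightarrow> real mat" where
  "kmat xs F = mat (length xs) (length xs) (\<lambda>(i,j). F (xs!i) (xs!j))"

lemma kmat_carrier[simp]: "kmat xs F \<in> carrier_mat (length xs) (length xs)"
  unfolding kmat_def by simp

lemma kmat_dim[simp]: "dim_row (kmat xs F) = length xs" "dim_col (kmat xs F) = length xs"
  unfolding kmat_def by auto

lemma kmat_index[simp]: "i < length xs \<Longrightarrow> j < length xs \<Longrightarrow> kmat xs F $$ (i,j) = F (xs!i) (xs!j)"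
  unfolding kmat_def by simp

lemma sum_nth_set: "distinct xs \<Longrightarrow> (\<Sum>i<length xs. f (xs!i)) = (\<Sum>c\<in>set xs. f c)"
  by (rule sum.reindex_bij_betw[OF bij_betw_nth[OF _ refl refl]])

lemma kmat_mult: assumes d: "distinct xs"
  shows "kmat xs F * kmat xs G = kmat xs (\<lambda>a b. \<Sum>c\<in>set xs. F a c * G c b)"
proof (rule eq_matI)
  fix i j assume ij: "i < dim_row (kmat xs (\<lambda>a b. \<Sum>c\<in>set xs. F a c * G c b))"
    "j < dim_col (kmat xs (\<lambda>a b. \<Sum>c\<in>set xs. F a c * G c b))"
  hence i: "i < length xs" and j: "j < length xs" by auto
  have "(kmat xs F * kmat xs G) $$ (i,j) = (\<Sum>l<length xs. F (xs!i) (xs!l) * G (xs!l) (xs!j))"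
    using i j by (simp add: scalar_prod_def atLeast0LessThan)
  also have "\<dots> = (\<Sum>c\<in>set xs. F (xs!i) c * G c (xs!j))"
    by (rule sum_nth_set[OF d])
  finally show "(kmat xs F * kmat xs G) $$ (i,j) = kmat xs (\<lambda>a b. \<Sum>c\<in>set xs. F a c * G c b) $$ (i,j)"
    using i j by simp
qed auto

lemma kmat_one: "distinct xs \<Longrightarrow> 1\<^sub>m (length xs) = kmat xs (\<lambda>a b. if a = b then 1 else 0)"
  by (intro eq_matI, auto simp: nth_eq_iff_index_eq)

lemma kmat_char: "distinct xs \<Longrightarrow> y \<cdot>\<^sub>m 1\<^sub>m (length xs) - kmat xs F = kmat xs (\<lambda>a b. (if a = b then y else 0) - F a b)"
  by (intro eq_matI, auto simp: nth_eq_iff_index_eq)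

lemma kmat_add: "kmat xs F + kmat xs G = kmat xs (\<lambda>a b. F a b + G a b)"
  by (intro eq_matI, auto)

lemma kmat_cong: "(\<And>a b. a \<in> set xs \<Longrightarrow> b \<in> set xs \<Longrightarrow> F a b = G a b) \<Longrightarrow> kmat xs F = kmat xs G"
  by (intro eq_matI, auto)

definition lowrank :: "'a list \<Rightarrow> nat \<Rightarrow> (nat \<Rightarrow> 'a \<Rightarrow> real) \<Rightarrow> (nat \<Rightarrow> 'a \<Rightarrow> real) \<Rightarrow> real mat" where
  "lowrank xs k us ws = kmat xs (\<lambda>a b. \<Sum>r<k. us r a * ws r b)"

definition gram :: "'a list \<Rightarrow> nat \<Rightarrow> (nat \<Rightarrow> 'a \<Rightarrow> real) \<Rightarrow> (nat \<Rightarrow> 'a \<Rightarrow> real) \<Rightarrow> real mat" where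
  "gram xs k us ws = mat k k (\<lambda>(r,s). \<Sum>c\<in>set xs. ws r c * us s c)"

lemma lowrank_det: assumes d: "distinct xs" and y: "y \<noteq> 0"
  shows "y ^ k * det (y \<cdot>\<^sub>m 1\<^sub>m (length xs) - lowrank xs k us ws) = y ^ length xs * det (y \<cdot>\<^sub>m 1\<^sub>m k - gram xs k us ws)"
proof -
  let ?n = "length xs"
  define U where "U = mat ?n k (\<lambda>(i,r). us r (xs!i))"
  define W where "W = mat k ?n (\<lambda>(r,j). ws r (xs!j))"
  have U: "U \<in> carrier_mat ?n k" and W: "W \<in> carrier_mat k ?n" unfolding U_def W_def by auto
  have UW: "U * W = lowrank xs k us ws" unfolding lowrank_def
    by (intro eq_matI, auto simp: U_def W_def scalar_prod_def atLeast0LessThan)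
  have WU: "W * U = gram xs k us ws" unfolding gram_def
    using sum_nth_set[OF d] by (intro eq_matI, auto simp: U_def W_def scalar_prod_def atLeast0LessThan)
  show ?thesis using det_sylvester[OF U W y] unfolding UW WU .
qed

lemma lowrank_orth: assumes d: "distinct xs"
  and o: "\<And>r s. r < k1 \<Longrightarrow> s < k2 \<Longrightarrow> (\<Sum>c\<in>set xs. ws1 r c * us2 s c) = 0"
  shows "lowrank xs k1 us1 ws1 * lowrank xs k2 us2 ws2 = 0\<^sub>m (length xs) (length xs)"
proof -
  have "lowrank xs k1 us1 ws1 * lowrank xs k2 us2 ws2 =
    kmat xs (\<lambda>a b. \<Sum>c\<in>set xs. (\<Sum>r<k1. us1 r a * ws1 r c) * (\<Sum>s<k2. us2 s c * ws2 s b))"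
    unfolding lowrank_def by (rule kmat_mult[OF d])
  also have "\<dots> = kmat xs (\<lambda>a b. 0)"
  proof (rule kmat_cong)
    fix a b
    have "(\<Sum>c\<in>set xs. (\<Sum>r<k1. us1 r a * ws1 r c) * (\<Sum>s<k2. us2 s c * ws2 s b))
      = (\<Sum>r<k1. \<Sum>s<k2. us1 r a * ws2 s b * (\<Sum>c\<in>set xs. ws1 r c * us2 s c))"
    proof -
      have "(\<Sum>c\<in>set xs. (\<Sum>r<k1. us1 r a * ws1 r c) * (\<Sum>s<k2. us2 s c * ws2 s b))
        = (\<Sum>c\<in>set xs. \<Sum>r<k1. \<Sum>s<k2. us1 r a * ws2 s b * (ws1 r c * us2 s c))"
        by (simp add: sum_product algebra_simps)
      also have "\<dots> = (\<Sum>r<k1. \<Sum>c\<in>set xs. \<Sum>s<k2. us1 r a * ws2 s b * (ws1 r c * us2 s c))"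
        by (rule sum.swap)
      also have "\<dots> = (\<Sum>r<k1. \<Sum>s<k2. \<Sum>c\<in>set xs. us1 r a * ws2 s b * (ws1 r c * us2 s c))"
        by (rule sum.cong[OF refl], rule sum.swap)
      finally show ?thesis by (simp add: sum_distrib_left)
    qed
    also have "\<dots> = 0" using o by simp
    finally show "(\<Sum>c\<in>set xs. (\<Sum>r<k1. us1 r a * ws1 r c) * (\<Sum>s<k2. us2 s c * ws2 s b)) = 0" .
  qed
  also have "\<dots> = 0\<^sub>m (length xs) (length xs)" by (intro eq_matI, auto simp: kmat_def)
  finally show ?thesis .
qed


lemma sum_delta_l: "finite S \<Longrightarrow> a \<in> S \<Longrightarrow> (\<Sum>c\<in>S. of_bool (a = c) * g c) = (g a :: real)"
  by (simp add: of_bool_def if_distrib[of "\<lambda>t. t * g _"] cong: if_cong)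
lemma sum_delta_r: "finite S \<Longrightarrow> b \<in> S \<Longrightarrow> (\<Sum>c\<in>S. g c * of_bool (c = b)) = (g b :: real)"
  by (simp add: of_bool_def if_distrib[of "\<lambda>t. g _ * t"] cong: if_cong)

lemma kmat_sq_diff: assumes d: "distinct xs"
  shows "kmat xs (\<lambda>a b. of_bool (a = b) * x - F a b) * kmat xs (\<lambda>a b. of_bool (a = b) * x + F a b)
    = kmat xs (\<lambda>a b. of_bool (a = b) * x^2 - (\<Sum>c\<in>set xs. F a c * F c b))"
  unfolding kmat_mult[OF d]
proof (rule kmat_cong)
  fix a b assume a: "a \<in> set xs" and b: "b \<in> set xs"
  have "(\<Sum>c\<in>set xs. (of_bool (a = c) * x - F a c) * (of_bool (c = b) * x + F c b))
    = (\<Sum>c\<in>set xs. of_bool (a = c) * (of_bool (c = b) * x * x + x * F c b))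
      - (\<Sum>c\<in>set xs. (F a c * x) * of_bool (c = b)) - (\<Sum>c\<in>set xs. F a c * F c b)"
    by (simp add: sum_subtractf[symmetric] algebra_simps)
  also have "\<dots> = of_bool (a = b) * x^2 - (\<Sum>c\<in>set xs. F a c * F c b)"
    by (subst sum_delta_l[OF _ a], simp, subst sum_delta_r[OF _ b], simp, simp add: power2_eq_square)
  finally show "(\<Sum>c\<in>set xs. (of_bool (a = c) * x - F a c) * (of_bool (c = b) * x + F c b)) = of_bool (a = b) * x^2 - (\<Sum>c\<in>set xs. F a c * F c b)" .
qed

lemma kmat_diag_left: assumes d: "distinct xs"
  shows "kmat xs (\<lambda>a b. of_bool (a = b) * g a) * kmat xs F = kmat xs (\<lambda>a b. g a * F a b)"
  unfolding kmat_mult[OF d]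
proof (rule kmat_cong)
  fix a b assume a: "a \<in> set xs" "b \<in> set xs"
  have "(\<Sum>c\<in>set xs. of_bool (a = c) * g a * F c b) = (\<Sum>c\<in>set xs. of_bool (a = c) * (g a * F c b))"
    by (simp add: ac_simps)
  also have "\<dots> = g a * F a b" by (rule sum_delta_l[OF _ a(1)], simp)
  finally show "(\<Sum>c\<in>set xs. of_bool (a = c) * g a * F c b) = g a * F a b" .
qed

lemma kmat_diag_right: assumes d: "distinct xs"
  shows "kmat xs F * kmat xs (\<lambda>a b. of_bool (a = b) * g a) = kmat xs (\<lambda>a b. F a b * g b)"
  unfolding kmat_mult[OF d]
proof (rule kmat_cong)
  fix a b assume "a \<in> set xs" "b \<in> set xs"
  thus "(\<Sum>c\<in>set xs. F a c * (of_bool (c = b) * g c)) = F a b * g b"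
    using sum_delta_r[of "set xs" b "\<lambda>c. F a c * g c"] by (simp add: ac_simps)
qed

lemma det_diag_sim: assumes d: "distinct xs" and g: "\<And>a. a \<in> set xs \<Longrightarrow> g a * g a = 1"
  and FG: "\<And>a b. a \<in> set xs \<Longrightarrow> b \<in> set xs \<Longrightarrow> g a * F a b * g b = G a b"
  shows "det (kmat xs G) = det (kmat xs F)"
proof -
  let ?D = "kmat xs (\<lambda>a b. of_bool (a = b) * g a)"
  have DD: "?D * ?D = 1\<^sub>m (length xs)"
    unfolding kmat_diag_left[OF d] kmat_one[OF d] by (rule kmat_cong, auto simp: g)
  have "?D * kmat xs F * ?D = kmat xs G"
    unfolding kmat_diag_left[OF d] kmat_diag_right[OF d] by (rule kmat_cong, simp add: FG)
  hence "det (kmat xs G) = det (?D * kmat xs F) * det ?D"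
    using det_mult[OF mult_carrier_mat[OF kmat_carrier kmat_carrier] kmat_carrier] by metis
  also have "\<dots> = det ?D * det (kmat xs F) * det ?D"
    using det_mult[OF kmat_carrier kmat_carrier] by metis
  also have "\<dots> = det (?D * ?D) * det (kmat xs F)"
  proof -
    have "det (?D * ?D) = det ?D * det ?D" by (rule det_mult, auto)
    thus ?thesis by (simp add: ac_simps)
  qed
  also have "\<dots> = det (kmat xs F)" using DD by simp
  finally show ?thesis .
qed


lemma vec_ip: assumes fin: "finite Vs" and S: "S \<subseteq> Vs" and T: "T \<subseteq> Vs"
  shows "(\<Sum>c\<in>UNIV \<times> Vs. vv S s c * vv T t c) = (1 + s * t) * real (card (S \<inter> T))"
proof -
  have "(\<Sum>c\<in>UNIV \<times> Vs. vv S s c * vv T t c) = (\<Sum>\<gamma>\<in>UNIV. \<Sum>w\<in>Vs. vv S s (\<gamma>, w) * vv T t (\<gamma>, w))"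
    by (subst sum.cartesian_product, simp add: case_prod_beta)
  also have "\<dots> = (\<Sum>w\<in>Vs. (1 + s * t) * of_bool (w \<in> S \<inter> T))"
    by (simp add: UNIV_bool vv_def sum.distrib[symmetric], intro sum.cong, auto)
  also have "\<dots> = (1 + s * t) * (\<Sum>w\<in>Vs. of_bool (w \<in> S \<inter> T))"
    by (simp add: sum_distrib_left)
  also have "(\<Sum>w\<in>Vs. of_bool (w \<in> S \<inter> T) :: real) = real (card (S \<inter> T))"
  proof -
    have "Vs \<inter> {w. w \<in> S \<inter> T} = S \<inter> T" using S T by auto
    thus ?thesis using fin by (simp add: of_bool_def sum.If_cases)
  qed
  finally show ?thesis .
qed


lemma vec_ip_lin: assumes fin: "finite Vs" and S: "S \<subseteq> Vs" "S' \<subseteq> Vs" and T: "T \<subseteq> Vs"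
  shows "(\<Sum>c\<in>UNIV \<times> Vs. (\<alpha> * vv S s c + \<beta> * vv S' s' c) * vv T t c)
     = \<alpha> * ((1 + s * t) * real (card (S \<inter> T))) + \<beta> * ((1 + s' * t) * real (card (S' \<inter> T)))"
proof -
  have "(\<Sum>c\<in>UNIV \<times> Vs. (\<alpha> * vv S s c + \<beta> * vv S' s' c) * vv T t c)
    = \<alpha> * (\<Sum>c\<in>UNIV \<times> Vs. vv S s c * vv T t c) + \<beta> * (\<Sum>c\<in>UNIV \<times> Vs. vv S' s' c * vv T t c)"
    by (simp add: sum.distrib sum_distrib_left algebra_simps)
  thus ?thesis using vec_ip[OF fin S(1) T] vec_ip[OF fin S(2) T] by simp
qed

definition vlin :: "real \<Rightarrow> 'v set \<Rightarrow> real \<Rightarrow> real \<Rightarrow> 'v set \<Rightarrow> real \<Rightarrow> bool \<times> 'v \<Rightarrow> real" where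
  "vlin \<alpha> S s \<beta> S' s' c = \<alpha> * vv S s c + \<beta> * vv S' s' c"

lemma vlin_ip: assumes fin: "finite Vs" and S: "S \<subseteq> Vs" "S' \<subseteq> Vs" and T: "T \<subseteq> Vs"
  shows "(\<Sum>c\<in>UNIV \<times> Vs. vlin \<alpha> S s \<beta> S' s' c * vv T t c)
     = \<alpha> * ((1 + s * t) * real (card (S \<inter> T))) + \<beta> * ((1 + s' * t) * real (card (S' \<inter> T)))"
  unfolding vlin_def by (rule vec_ip_lin[OF assms])

lemma ints[simp]: "Inl ` A \<inter> Inr ` B = {}" "Inr ` B \<inter> Inl ` A = {}"
  "Inl ` A \<inter> Inl ` A' = Inl ` (A \<inter> A')" "Inr ` C \<inter> Inr ` D = Inr ` (C \<inter> D)"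
  by auto

lemma lt3_cases: "(r::nat) < 3 \<Longrightarrow> r = 0 \<or> r = 1 \<or> r = 2" by auto

context
  fixes P :: "'p set" and L :: "'p set set" and q :: nat and p0 :: 'p and l0 :: "'p set"
    and xs :: "(bool \<times> ('p + 'p set)) list"
  assumes pp: "proj_plane_order P L q" and l0: "l0 \<in> L" and p0: "p0 \<in> l0"
    and xs: "distinct xs" "set xs = UNIV \<times> inc_vertices P L"
begin

definition "us1 = (\<lambda>(r::nat). vv (Inl ` P) 1)"
definition "ws1 = (\<lambda>(r::nat). vlin (1/2) (Inl ` P) 1 0 (Inl ` P) 1)"
definition "us2 = (\<lambda>(r::nat). vv (Inr ` L) 1)"
definition "ws2 = (\<lambda>(r::nat). vlin (1/2) (Inr ` L) 1 0 (Inr ` L) 1)"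
definition "us3 = (\<lambda>(r::nat). if r = 0 then vv (Inl ` P) (-1) else if r = 1 then vv (Inl ` l0) (-1) else vv {Inl p0} (-1))"
definition "ws3 = (\<lambda>(r::nat). if r = 0 then vlin (1/2) (Inl ` P) (-1) 0 (Inl ` P) (-1)
    else if r = 1 then vlin (-1) {Inl p0} (-1) 0 {Inl p0} (-1)
    else vlin (-1) (Inl ` l0) (-1) 2 {Inl p0} (-1))"
definition "us4 = (\<lambda>(r::nat). if r = 0 then vv (Inr ` L) (-1) else if r = 1 then vv (Inr ` {l\<in>L. p0 \<in> l}) (-1) else vv {Inr l0} (-1))"
definition "ws4 = (\<lambda>(r::nat). if r = 0 then vlin (1/2) (Inr ` L) (-1) 0 (Inr ` L) (-1)
    else if r = 1 then vlin (-1) {Inr l0} (-1) 0 {Inr l0} (-1)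
    else vlin (-1) (Inr ` {l\<in>L. p0 \<in> l}) (-1) 2 {Inr l0} (-1))"

lemma Tker_fam: "Tker P L p0 l0 a b = (\<Sum>r<1. us1 r a * ws1 r b) + ((\<Sum>r<1. us2 r a * ws2 r b)
   + ((\<Sum>r<3. us3 r a * ws3 r b) + (\<Sum>r<3. us4 r a * ws4 r b)))"
  by (simp add: Tker_def[OF pp l0 p0] us1_def ws1_def us2_def ws2_def us3_def ws3_def us4_def ws4_def vlin_def numeral_3_eq_3 algebra_simps)


lemma l0P: "l0 \<subseteq> P" using pp_sub[OF pp l0] .
lemma p0P': "p0 \<in> P" using l0P p0 by auto
lemma finV': "finite (inc_vertices P L)" using pp_finP[OF pp] pp_finL[OF pp] unfolding inc_vertices_def by auto
lemma subs2[simp]: "Inl p0 \<in> inc_vertices P L" "Inr l0 \<in> inc_vertices P L"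
  using p0P' l0 unfolding inc_vertices_def by auto
lemma subs[simp]: "Inl ` P \<subseteq> inc_vertices P L" "Inr ` L \<subseteq> inc_vertices P L" "Inl ` l0 \<subseteq> inc_vertices P L"
  "Inr ` {l\<in>L. p0 \<in> l} \<subseteq> inc_vertices P L" "{Inl p0} \<subseteq> inc_vertices P L" "{Inr l0} \<subseteq> inc_vertices P L"
  using l0P p0P' l0 unfolding inc_vertices_def by auto

lemma ip[simp]: "S \<subseteq> inc_vertices P L \<Longrightarrow> S' \<subseteq> inc_vertices P L \<Longrightarrow> T \<subseteq> inc_vertices P L \<Longrightarrow>
  (\<Sum>c\<in>set xs. vlin \<alpha> S s \<beta> S' s' c * vv T t c) =
     \<alpha> * ((1 + s * t) * real (card (S \<inter> T))) + \<beta> * ((1 + s' * t) * real (card (S' \<inter> T)))"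
  using vlin_ip[OF finV', of S S' T] unfolding xs(2) by auto

lemma cards[simp]: "card (Inl ` P) = q * q + q + 1" "card (Inr ` L) = q * q + q + 1"
  "card (Inl ` l0) = q + 1" "card (Inr ` {l\<in>L. p0 \<in> l}) = q + 1"
  using pp_card_P[OF pp] pp_card_L[OF pp] pp_card_line[OF pp l0] pp_lines_through[OF pp p0P']
  by (auto simp: card_image)


lemma ints2[simp]: "P \<inter> l0 = l0" "l0 \<inter> P = l0" "L \<inter> {l\<in>L. p0 \<in> l} = {l\<in>L. p0 \<in> l}"
   "{l\<in>L. p0 \<in> l} \<inter> L = {l\<in>L. p0 \<in> l}"
  using l0P by auto

lemma orth12: "r < 1 \<Longrightarrow> s < 1 \<Longrightarrow> (\<Sum>c\<in>set xs. ws1 r c * us2 s c) = 0"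
  by (auto simp: ws1_def us2_def)
lemma orth13: "r < 1 \<Longrightarrow> s < 3 \<Longrightarrow> (\<Sum>c\<in>set xs. ws1 r c * us3 s c) = 0"
  by (auto simp: ws1_def us3_def p0P')
lemma orth14: "r < 1 \<Longrightarrow> s < 3 \<Longrightarrow> (\<Sum>c\<in>set xs. ws1 r c * us4 s c) = 0"
  by (auto simp: ws1_def us4_def)
lemma orth23: "r < 1 \<Longrightarrow> s < 3 \<Longrightarrow> (\<Sum>c\<in>set xs. ws2 r c * us3 s c) = 0"
  by (auto simp: ws2_def us3_def)
lemma orth24: "r < 1 \<Longrightarrow> s < 3 \<Longrightarrow> (\<Sum>c\<in>set xs. ws2 r c * us4 s c) = 0"
  by (auto simp: ws2_def us4_def l0)
lemma orth34: "r < 3 \<Longrightarrow> s < 3 \<Longrightarrow> (\<Sum>c\<in>set xs. ws3 r c * us4 s c) = 0"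
  by (auto simp: ws3_def us4_def)


lemma char_gram: "y \<cdot>\<^sub>m 1\<^sub>m k - gram xs k us ws = mat k k (\<lambda>(r,s). (if r = s then y else 0) - (\<Sum>c\<in>set xs. ws r c * us s c))"
  unfolding gram_def by (intro eq_matI, auto)

lemma det_mat1: "det (mat 1 1 f) = (f (0,0) :: real)"
  by (subst det_single, auto)

abbreviation "NN \<equiv> real (q * q + q + 1)"

lemma piece1: assumes y: "y \<noteq> 0"
  shows "y ^ 1 * det (y \<cdot>\<^sub>m 1\<^sub>m (length xs) - lowrank xs 1 us1 ws1) = y ^ length xs * (y - NN)"
  unfolding lowrank_det[OF xs(1) y] char_gram det_mat1 apply (simp add: us1_def ws1_def) by (simp add: field_simps)

lemma piece2: assumes y: "y \<noteq> 0"
  shows "y ^ 1 * det (y \<cdot>\<^sub>m 1\<^sub>m (length xs) - lowrank xs 1 us2 ws2) = y ^ length xs * (y - NN)"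
  unfolding lowrank_det[OF xs(1) y] char_gram det_mat1 apply (simp add: us2_def ws2_def) by (simp add: field_simps)

lemma piece3: assumes y: "y \<noteq> 0"
  shows "y ^ 3 * det (y \<cdot>\<^sub>m 1\<^sub>m (length xs) - lowrank xs 3 us3 ws3) = y ^ length xs * (y^3 - NN * y^2 + 4 * real q ^ 3)"
  unfolding lowrank_det[OF xs(1) y] char_gram det_mat3 using p0 p0P'
  apply (simp add: us3_def ws3_def)
  by (simp add: field_simps power2_eq_square power3_eq_cube)

lemma piece4: assumes y: "y \<noteq> 0"
  shows "y ^ 3 * det (y \<cdot>\<^sub>m 1\<^sub>m (length xs) - lowrank xs 3 us4 ws4) = y ^ length xs * (y^3 - NN * y^2 + 4 * real q ^ 3)"
  unfolding lowrank_det[OF xs(1) y] char_gram det_mat3 using p0 l0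
  apply (simp add: us4_def ws4_def)
  by (simp add: field_simps power2_eq_square power3_eq_cube)

end


definition sg :: "bool \<times> ('p + 'p set) \<Rightarrow> real" where
  "sg a = (if isl (snd a) then 1 else -1)"

lemma Mf_bip: assumes "Mf (Inl p0) (Inr l0) a b \<noteq> 0" shows "isl (snd a) \<noteq> isl (snd b)"
proof -
  have d: "double_adj inc_adj (Inl p0) (Inr l0) a b" using assms unfolding Mf_def by auto
  obtain \<alpha> w \<beta> z where ab: "a = (\<alpha>, w)" "b = (\<beta>, z)" by (cases a, cases b)
  show ?thesis using d unfolding ab double_adj_def inc_adj_def by auto
qed

lemma Mf_sg: "sg a * (of_bool (a = b) * x - Mf (Inl p0) (Inr l0) a b) * sg b = of_bool (a = b) * x + Mf (Inl p0) (Inr l0) a b"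
proof (cases "Mf (Inl p0) (Inr l0) a b = 0")
  case True thus ?thesis by (auto simp: sg_def)
next
  case False
  hence "isl (snd a) \<noteq> isl (snd b)" by (rule Mf_bip)
  thus ?thesis by (auto simp: sg_def)
qed

context
  fixes P :: "'p set" and L :: "'p set set" and q :: nat and p0 :: 'p and l0 :: "'p set"
    and xs :: "(bool \<times> ('p + 'p set)) list"
  assumes pp: "proj_plane_order P L q" and l0: "l0 \<in> L" and p0: "p0 \<in> l0"
    and xs: "distinct xs" "set xs = UNIV \<times> inc_vertices P L"
begin

abbreviation "A1 \<equiv> lowrank xs 1 (us1 P) (ws1 P)"
abbreviation "A2 \<equiv> lowrank xs 1 (us2 L) (ws2 L)"
abbreviation "A3 \<equiv> lowrank xs 3 (us3 P p0 l0) (ws3 P p0 l0)"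
abbreviation "A4 \<equiv> lowrank xs 3 (us4 L p0 l0) (ws4 L p0 l0)"


lemma T_eq: "kmat xs (Tker P L p0 l0) = A1 + (A2 + (A3 + A4))"
  unfolding lowrank_def kmat_add
  by (rule kmat_cong, simp add: Tker_fam[OF pp l0 p0 xs])

lemma lr_carrier: "lowrank xs k us ws \<in> carrier_mat (length xs) (length xs)"
  unfolding lowrank_def by simp

abbreviation "gg y \<equiv> y^3 - NN q * y^2 + 4 * real q ^ 3"

lemma cancel_pow: assumes "y \<noteq> (0::real)" "y ^ k * X = y ^ n * Z" "k \<le> n" shows "X = y ^ (n - k) * Z"
proof -
  have "y ^ n = y ^ k * y ^ (n - k)" using assms(3) by (simp add: power_add[symmetric])
  thus ?thesis using assms(1,2) by simp
qed

lemma det_T: assumes y: "y \<noteq> 0" and n: "length xs \<ge> 8"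
  shows "det (y \<cdot>\<^sub>m 1\<^sub>m (length xs) - kmat xs (Tker P L p0 l0)) = y ^ (length xs - 8) * (y - NN q)^2 * (gg y)^2"
proof -
  let ?n = "length xs"
  let ?D = "\<lambda>A. det (y \<cdot>\<^sub>m 1\<^sub>m ?n - A)"
  have D1: "?D A1 = y ^ (?n - 1) * (y - NN q)"
    by (rule cancel_pow[OF y piece1[OF pp l0 p0 xs y]], insert n, auto)
  have D2: "?D A2 = y ^ (?n - 1) * (y - NN q)"
    by (rule cancel_pow[OF y piece2[OF pp l0 p0 xs y]], insert n, auto)
  have D3: "?D A3 = y ^ (?n - 3) * gg y"
    by (rule cancel_pow[OF y piece3[OF pp l0 p0 xs y]], insert n, auto)
  have D4: "?D A4 = y ^ (?n - 3) * gg y"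
    by (rule cancel_pow[OF y piece4[OF pp l0 p0 xs y]], insert n, auto)
  have o34: "A3 * A4 = 0\<^sub>m ?n ?n" by (rule lowrank_orth[OF xs(1)], rule orth34[OF pp l0 p0 xs])
  have o23: "A2 * A3 = 0\<^sub>m ?n ?n" by (rule lowrank_orth[OF xs(1)], rule orth23[OF pp l0 p0 xs])
  have o24: "A2 * A4 = 0\<^sub>m ?n ?n" by (rule lowrank_orth[OF xs(1)], rule orth24[OF pp l0 p0 xs])
  have o12: "A1 * A2 = 0\<^sub>m ?n ?n" by (rule lowrank_orth[OF xs(1)], rule orth12[OF pp l0 p0 xs])
  have o13: "A1 * A3 = 0\<^sub>m ?n ?n" by (rule lowrank_orth[OF xs(1)], rule orth13[OF pp l0 p0 xs])
  have o14: "A1 * A4 = 0\<^sub>m ?n ?n" by (rule lowrank_orth[OF xs(1)], rule orth14[OF pp l0 p0 xs])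
  have c: "A1 \<in> carrier_mat ?n ?n" "A2 \<in> carrier_mat ?n ?n" "A3 \<in> carrier_mat ?n ?n" "A4 \<in> carrier_mat ?n ?n"
    by (rule lr_carrier)+
  have c34: "A3 + A4 \<in> carrier_mat ?n ?n" using c by simp
  have c234: "A2 + (A3 + A4) \<in> carrier_mat ?n ?n" using c by simp
  have o234: "A2 * (A3 + A4) = 0\<^sub>m ?n ?n"
    using mult_add_distrib_mat[OF c(2) c(3) c(4)] o23 o24 by simp
  have o1234: "A1 * (A2 + (A3 + A4)) = 0\<^sub>m ?n ?n"
    using mult_add_distrib_mat[OF c(1) c(2) c34] mult_add_distrib_mat[OF c(1) c(3) c(4)] o12 o13 o14 by simp
  have e34: "y ^ ?n * ?D (A3 + A4) = ?D A3 * ?D A4" by (rule det_orth_pieces[OF c(3) c(4) o34])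
  have e234: "y ^ ?n * ?D (A2 + (A3 + A4)) = ?D A2 * ?D (A3 + A4)"
    by (rule det_orth_pieces[OF c(2) c34 o234])
  have e1234: "y ^ ?n * ?D (A1 + (A2 + (A3 + A4))) = ?D A1 * ?D (A2 + (A3 + A4))"
    by (rule det_orth_pieces[OF c(1) c234 o1234])
  define G where "G = gg y"
  define N where "N = y - NN q"
  have pc: "a + b = c + d \<Longrightarrow> y^a * y^b = y^c * y^d" for a b c d by (simp add: power_add[symmetric])
  have p1: "y ^ (?n - 3) * y ^ (?n - 3) = y ^ ?n * y ^ (?n - 6)" by (rule pc, insert n, simp)
  have "y ^ ?n * ?D (A3 + A4) = y ^ ?n * (y ^ (?n - 6) * G^2)"
    unfolding e34 D3 D4 G_def[symmetric] using p1 by (simp add: power2_eq_square algebra_simps)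
  hence E34: "?D (A3 + A4) = y ^ (?n - 6) * G^2" using y by simp
  have p2: "y ^ (?n - 1) * y ^ (?n - 6) = y ^ ?n * y ^ (?n - 7)" by (rule pc, insert n, simp)
  have "y ^ ?n * ?D (A2 + (A3 + A4)) = y ^ ?n * (y ^ (?n - 7) * N * G^2)"
    unfolding e234 D2 E34 N_def[symmetric] using p2 by (simp add: algebra_simps)
  hence E234: "?D (A2 + (A3 + A4)) = y ^ (?n - 7) * N * G^2" using y by simp
  have p3: "y ^ (?n - 1) * y ^ (?n - 7) = y ^ ?n * y ^ (?n - 8)" by (rule pc, insert n, simp)
  have "y ^ ?n * ?D (A1 + (A2 + (A3 + A4))) = y ^ ?n * (y ^ (?n - 8) * N^2 * G^2)"
    unfolding e1234 D1 E234 N_def[symmetric] using p3 by (simp add: power2_eq_square algebra_simps)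
  hence "?D (A1 + (A2 + (A3 + A4))) = y ^ (?n - 8) * (y - NN q)^2 * (gg y)^2" using y by (simp add: G_def N_def)
  thus ?thesis unfolding T_eq .
qed


lemma Msq_xs: assumes a: "a \<in> set xs" and b: "b \<in> set xs"
  shows "(\<Sum>c\<in>set xs. Mf (Inl p0) (Inr l0) a c * Mf (Inl p0) (Inr l0) c b) = real q * of_bool (a = b) + Tker P L p0 l0 a b"
proof -
  obtain \<alpha> w \<beta> z where ab: "a = (\<alpha>, w)" "b = (\<beta>, z)" by (cases a, cases b)
  have w: "w \<in> inc_vertices P L" and z: "z \<in> inc_vertices P L" using a b xs(2) ab by auto
  show ?thesis unfolding xs(2) ab by (rule Msq_closed[OF pp l0 p0 w z])
qed

abbreviation "Km x \<equiv> kmat xs (\<lambda>a b. of_bool (a = b) * x - Mf (Inl p0) (Inr l0) a b)"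

lemma det_sq: assumes x: "x^2 \<noteq> real q" and n: "length xs \<ge> 8"
  shows "det (Km x) ^ 2 = (x^2 - real q) ^ (length xs - 8) * (x^2 - real q - NN q)^2 * (gg (x^2 - real q))^2"
proof -
  let ?Kp = "kmat xs (\<lambda>a b. of_bool (a = b) * x + Mf (Inl p0) (Inr l0) a b)"
  have "det ?Kp = det (Km x)"
    by (rule det_diag_sim[OF xs(1), of sg], simp add: sg_def, rule Mf_sg)
  moreover have "det (Km x * ?Kp) = det (Km x) * det ?Kp" by (rule det_mult, auto)
  ultimately have "det (Km x) ^ 2 = det (Km x * ?Kp)" by (simp add: power2_eq_square)
  also have "Km x * ?Kp = kmat xs (\<lambda>a b. of_bool (a = b) * x^2 - (\<Sum>c\<in>set xs. Mf (Inl p0) (Inr l0) a c * Mf (Inl p0) (Inr l0) c b))"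
    by (rule kmat_sq_diff[OF xs(1)])
  also have "\<dots> = (x^2 - real q) \<cdot>\<^sub>m 1\<^sub>m (length xs) - kmat xs (Tker P L p0 l0)"
    unfolding kmat_char[OF xs(1)] by (rule kmat_cong, simp add: Msq_xs)
  also have "det \<dots> = (x^2 - real q) ^ (length xs - 8) * (x^2 - real q - NN q)^2 * (gg (x^2 - real q))^2"
    by (rule det_T[OF _ n], insert x, simp)
  finally show ?thesis .
qed

lemma charpoly_Km: "poly (char_poly (kmat xs (Mf (Inl p0) (Inr l0)))) x = det (Km x)"
proof -
  have "poly (char_poly (kmat xs (Mf (Inl p0) (Inr l0)))) x = det (- char_matrix (kmat xs (Mf (Inl p0) (Inr l0))) x)"
    by (rule char_poly_matrix[OF kmat_carrier])
  also have "- char_matrix (kmat xs (Mf (Inl p0) (Inr l0))) x = Km x"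
    unfolding char_matrix_def by (intro eq_matI, auto simp: nth_eq_iff_index_eq xs(1))
  finally show ?thesis .
qed

end


definition cpol :: "real \<Rightarrow> real poly" where "cpol Q = [: Q^2 - Q, -3*Q, 1 - Q, 1 :]"
definition cmpol :: "real \<Rightarrow> real poly" where "cmpol Q = [: -(Q^2 - Q), -3*Q, Q - 1, 1 :]"

lemma poly_cpol: "poly (cpol Q) x = x^3 + (1 - Q) * x^2 - 3*Q*x + Q^2 - Q"
  unfolding cpol_def by (simp add: algebra_simps power2_eq_square power3_eq_cube)
lemma poly_cmpol: "poly (cmpol Q) x = - poly (cpol Q) (-x)"
  unfolding cpol_def cmpol_def by (simp add: algebra_simps power2_eq_square power3_eq_cube)
lemma cprod: "poly (cpol Q) x * poly (cmpol Q) x = (x^2-Q)^3 - (Q^2+Q+1)*(x^2-Q)^2 + 4*Q^3"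
  unfolding cpol_def cmpol_def by (simp add: algebra_simps power2_eq_square power3_eq_cube)

lemma cubic_roots: assumes Q: "Q \<ge> (2::real)"
  shows "\<exists>a R b. a < - sqrt Q \<and> sqrt (Q - 1) - 1 < R \<and> R < sqrt Q - 1 \<and> sqrt Q < b \<and>
     poly (cpol Q) a = 0 \<and> poly (cpol Q) R = 0 \<and> poly (cpol Q) b = 0"
proof -
  define s where "s = sqrt Q"
  define u where "u = sqrt (Q - 1)"
  have s2: "Q = s^2" unfolding s_def using Q by simp
  have u2: "Q = u^2 + 1" unfolding u_def using Q by simp
  have s1: "s > 1" unfolding s_def using Q by simp
  have u1: "u \<ge> 1" unfolding u_def using Q by simp
  have sQ: "s < Q" using s1 s2 by (simp add: power2_eq_square)
  have cont: "continuous_on {x..y} (poly (cpol Q))" for x y by (intro continuous_intros)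
  have v1: "poly (cpol Q) (-3*Q) < 0"
  proof -
    have "poly (cpol Q) (-3*Q) = Q * (-36*Q^2 + 19*Q - 1)" unfolding poly_cpol
      by (simp add: algebra_simps power2_eq_square power3_eq_cube)
    moreover have "-36*Q^2 + 19*Q - 1 < 0"
    proof -
      have "Q * Q \<ge> 2 * Q" using Q mult_right_mono[OF Q, of Q] by simp
      thus ?thesis using Q unfolding power2_eq_square by linarith
    qed
    ultimately show ?thesis using Q by (simp add: mult_pos_neg)
  qed
  have v2: "poly (cpol Q) (-s) = 2 * Q * s" unfolding poly_cpol s2
    by (simp add: algebra_simps power2_eq_square power3_eq_cube)
  have v3: "poly (cpol Q) (u - 1) = 2" unfolding poly_cpol u2
    by (simp add: algebra_simps power2_eq_square power3_eq_cube)
  have v4: "poly (cpol Q) (s - 1) = s - Q" unfolding poly_cpol s2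
    by (simp add: algebra_simps power2_eq_square power3_eq_cube)
  have v5: "poly (cpol Q) s = - 2 * Q * s" unfolding poly_cpol s2
    by (simp add: algebra_simps power2_eq_square power3_eq_cube)
  have v6: "poly (cpol Q) (3*Q) = Q * (18*Q^2 + Q - 1)" unfolding poly_cpol
    by (simp add: algebra_simps power2_eq_square power3_eq_cube)
  have p2: "poly (cpol Q) (-s) > 0" using v2 s1 Q by simp
  have p5: "poly (cpol Q) s < 0" using v5 s1 Q by simp
  have p6: "poly (cpol Q) (3*Q) > 0"
  proof -
    have "18*Q^2 + Q - 1 > 0" using Q zero_le_power2[of Q] by linarith
    thus ?thesis using v6 Q by simp
  qed
  have p4: "poly (cpol Q) (s - 1) < 0" using v4 sQ by simp
  obtain a where a: "-3*Q \<le> a" "a \<le> -s" "poly (cpol Q) a = 0"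
    using IVT'[of "poly (cpol Q)" "-3*Q" 0 "-s", OF less_imp_le[OF v1] less_imp_le[OF p2] _ cont] s1 sQ by auto
  obtain R where R: "u - 1 \<le> R" "R \<le> s - 1" "poly (cpol Q) R = 0"
  proof -
    have us: "u \<le> s" unfolding u_def s_def by simp
    show ?thesis
      using IVT2'[of "poly (cpol Q)" "s - 1" 0 "u - 1", OF less_imp_le[OF p4] _ _ cont] v3 us that by auto
  qed
  obtain b where b: "s \<le> b" "b \<le> 3*Q" "poly (cpol Q) b = 0"
    using IVT'[of "poly (cpol Q)" s 0 "3*Q", OF less_imp_le[OF p5] less_imp_le[OF p6] _ cont] sQ Q by fastforce
  have "a \<noteq> -s" using a p2 by auto
  moreover have "R \<noteq> u - 1" "R \<noteq> s - 1" using R v3 p4 by auto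
  moreover have "b \<noteq> s" using b p5 by auto
  ultimately show ?thesis using a R b unfolding s_def[symmetric] u_def[symmetric]
    by (intro exI[of _ a] exI[of _ R] exI[of _ b]) auto
qed


lemma filter_rep: "filter_mset P (replicate_mset n x) = (if P x then replicate_mset n x else {#})"
  by (induction n) auto

lemma proots_three: fixes p :: "real poly"
  assumes p: "p \<noteq> 0" and d: "degree p \<le> 3" and r: "r1 \<noteq> r2" "r1 \<noteq> r3" "r2 \<noteq> r3"
    and roots: "poly p r1 = 0" "poly p r2 = 0" "poly p r3 = 0"
  shows "proots p = {#r1, r2, r3#}"
proof -
  let ?A = "{#r1, r2, r3#}"
  have sub: "?A \<subseteq># proots p"
  proof (rule mset_subset_eqI)
    fix x
    have "count ?A x \<le> 1" using r by auto
    moreover have "count ?A x \<noteq> 0 \<Longrightarrow> order x p \<ge> 1"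
      using roots p order_root[of p x] by (auto split: if_splits)
    ultimately show "count ?A x \<le> count (proots p) x" using p
      by (cases "count ?A x = 0") auto
  qed
  have "size (proots p) \<le> 3" using size_proots_le[of p] d by simp
  hence "size (proots p - ?A) = 0" using size_Diff_submset[OF sub] by simp
  hence "proots p - ?A = {#}" by simp
  thus ?thesis using sub by (metis subset_mset.diff_add add_cancel_right_left)
qed

lemma sorted_nth_eq: "sorted xs \<Longrightarrow> r \<in> set xs \<Longrightarrow> length (filter (\<lambda>x. x < r) xs) = i \<Longrightarrow> xs ! i = (r :: real)"
proof (induction xs arbitrary: i)
  case Nil thus ?case by simp
next
  case (Cons y ys)
  show ?case
  proof (cases "y < r")
    case True
    then obtain j where j: "i = Suc j" "length (filter (\<lambda>x. x < r) ys) = j" using Cons.prems by auto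
    have "r \<in> set ys" using Cons.prems True by auto
    thus ?thesis using Cons.IH[of j] Cons.prems j by auto
  next
    case False
    have "\<forall>z\<in>set ys. y \<le> z" using Cons.prems(1) by auto
    hence "y = r" using Cons.prems(2) False by auto
    moreover have "\<forall>z\<in>set (y # ys). \<not> z < r" using False \<open>\<forall>z\<in>set ys. y \<le> z\<close> by force
    hence "filter (\<lambda>x. x < r) (y # ys) = []" by (simp only: filter_empty_conv)
    hence "i = 0" using Cons.prems(3) by simp
    ultimately show ?thesis by simp
  qed
qed

lemma nth_sorted_mset: assumes "r \<in># M" "size (filter_mset (\<lambda>x. x < r) M) = i"
  shows "sorted_list_of_multiset M ! i = (r :: real)"
proof (rule sorted_nth_eq)
  show "sorted (sorted_list_of_multiset M)" by simp
  show "r \<in> set (sorted_list_of_multiset M)" using assms(1) by simp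
  have "mset (filter (\<lambda>x. x < r) (sorted_list_of_multiset M)) = filter_mset (\<lambda>x. x < r) M"
    by (simp add: mset_filter)
  thus "length (filter (\<lambda>x. x < r) (sorted_list_of_multiset M)) = i"
    using assms(2) by (metis size_mset)
qed

definition fpol :: "real \<Rightarrow> nat \<Rightarrow> real poly" where
  "fpol Q m = [:-(Q+1),1:] * [:Q+1,1:] * ([:-sqrt Q,1:] * [:sqrt Q,1:])^m * cpol Q * cmpol Q"

lemma poly_fpol: "Q \<ge> 0 \<Longrightarrow> poly (fpol Q m) x = (x^2 - (Q+1)^2) * (x^2 - Q)^m * (poly (cpol Q) x * poly (cmpol Q) x)"
  unfolding fpol_def by (simp add: poly_power algebra_simps power2_eq_square)

lemma lead_fpol: "lead_coeff (fpol Q m) = 1"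
  unfolding fpol_def lead_coeff_mult lead_coeff_power by (simp add: cpol_def cmpol_def)

lemma fpol_main: assumes Q: "Q \<ge> 2"
  shows "\<exists>R. sqrt (Q - 1) - 1 < R \<and> R < sqrt Q - 1 \<and> poly (cpol Q) R = 0 \<and>
    rev (sorted_list_of_multiset (proots (fpol Q m))) ! (m + 3) = R \<and>
    rev (sorted_list_of_multiset (proots (fpol Q m))) ! (m + 4) = - R \<and>
    size (proots (fpol Q m)) = 2 * m + 8"
proof -
  obtain a R b where abR: "a < - sqrt Q" "sqrt (Q - 1) - 1 < R" "R < sqrt Q - 1" "sqrt Q < b"
     "poly (cpol Q) a = 0" "poly (cpol Q) R = 0" "poly (cpol Q) b = 0"
    using cubic_roots[OF Q] by blast
  define s where "s = sqrt Q"
  have s1: "s > 1" unfolding s_def using Q by simp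
  have ss: "s * s = Q" unfolding s_def using Q by simp
  have "s * 1 < s * s" using s1 by (intro mult_strict_left_mono, auto)
  hence sQ: "s < Q" using ss by simp
  have "sqrt (Q - 1) \<ge> 1" using Q by simp
  hence R0: "R > 0" using abR(2) by linarith
  have c0: "cpol Q \<noteq> 0" "cmpol Q \<noteq> 0" unfolding cpol_def cmpol_def by auto
  have pc: "proots (cpol Q) = {#a, R, b#}"
    by (rule proots_three[OF c0(1)], insert abR R0 s1, auto simp: cpol_def s_def)
  have pcm: "proots (cmpol Q) = {#-a, -R, -b#}"
  proof (rule proots_three[OF c0(2)])
    show "degree (cmpol Q) \<le> 3" by (simp add: cmpol_def)
  qed (insert abR R0 s1, auto simp: poly_cmpol s_def)
  have nz: "[:-sqrt Q, 1:] \<noteq> 0" "[:sqrt Q, 1:] \<noteq> 0" "[:-(Q+1),1:] \<noteq> 0" "[:Q+1,1:] \<noteq> 0" by auto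
  let ?M = "proots (fpol Q m)"
  have M: "?M = {#Q+1#} + {#-(Q+1)#} + (replicate_mset m s + replicate_mset m (-s)) + {#a, R, b#} + {#-a, -R, -b#}"
  proof -
    have nz2: "[:-sqrt Q, 1:] * [:sqrt Q, 1:] \<noteq> 0" using nz by simp
    have "?M = proots [:-(Q+1),1:] + proots [:Q+1,1:] + proots (([:-sqrt Q, 1:] * [:sqrt Q, 1:])^m) + proots (cpol Q) + proots (cmpol Q)"
      unfolding fpol_def
      by (simp only: proots_mult mult_eq_0_iff power_eq_0_iff c0 nz nz2 simp_thms de_Morgan_disj not_False_eq_True)
    also have "proots (([:-sqrt Q, 1:] * [:sqrt Q, 1:])^m) = repeat_mset m ({#sqrt Q#} + {#- sqrt Q#})"
      unfolding proots_power by (subst proots_mult, insert nz, auto)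
    finally show ?thesis unfolding pc pcm s_def by simp
  qed
  have sz: "size ?M = 2 * m + 8" unfolding M by simp
  have lt1: "size (filter_mset (\<lambda>x. x < R) ?M) = m + 4"
    unfolding M using abR R0 s1 sQ unfolding s_def[symmetric] by (auto simp: filter_rep)
  have lt2: "size (filter_mset (\<lambda>x. x < -R) ?M) = m + 3"
    unfolding M using abR R0 s1 sQ unfolding s_def[symmetric] by (auto simp: filter_rep)
  have e1: "sorted_list_of_multiset ?M ! (m + 4) = R"
    by (rule nth_sorted_mset[OF _ lt1], simp add: M)
  have e2: "sorted_list_of_multiset ?M ! (m + 3) = -R"
    by (rule nth_sorted_mset[OF _ lt2], simp add: M)
  have len: "length (sorted_list_of_multiset ?M) = 2 * m + 8" using sz by (metis mset_sorted_list_of_multiset size_mset)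
  have r1: "rev (sorted_list_of_multiset ?M) ! (m + 3) = R"
    using e1 len by (simp add: rev_nth add.commute)
  have r2: "rev (sorted_list_of_multiset ?M) ! (m + 4) = -R"
    using e2 len by (simp add: rev_nth add.commute)
  show ?thesis
    using abR r1 r2 sz by blast
qed


lemma poly_sq_eq: fixes p r :: "real poly"
  assumes "\<And>x. x > t \<Longrightarrow> poly p x ^ 2 = poly r x ^ 2" shows "p ^ 2 = r ^ 2"
proof (rule ccontr)
  assume ne: "p ^ 2 \<noteq> r ^ 2"
  hence "p ^ 2 - r ^ 2 \<noteq> 0" by simp
  hence fin: "finite {x. poly (p ^ 2 - r ^ 2) x = 0}" by (rule poly_roots_finite)
  have "{t<..} \<subseteq> {x. poly (p ^ 2 - r ^ 2) x = 0}" using assms by (auto simp: poly_power)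
  hence "finite {t<..}" using fin finite_subset by blast
  thus False using infinite_Ioi by blast
qed

lemma double_adj_sym: "double_adj adj v0 v1 = double_adj adj v1 v0"
  unfolding double_adj_def by (intro ext, auto simp: insert_commute)

context
  fixes P :: "'p set" and L :: "'p set set" and q :: nat and p0 :: 'p and l0 :: "'p set"
  assumes pp: "proj_plane_order P L q" and l0: "l0 \<in> L" and p0: "p0 \<in> l0" and q2: "q \<ge> 2"
begin

abbreviation "Vh \<equiv> double_vertices (inc_vertices P L)"

lemma finVh: "finite Vh"
  unfolding double_vertices_def using finV[OF pp l0 p0] by simp

lemma card_V: "card (inc_vertices P L) = 2 * (q * q + q + 1)"
proof -
  have "card (inc_vertices P L) = card (Inl ` P :: ('p + 'p set) set) + card (Inr ` L :: ('p + 'p set) set)"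
    unfolding inc_vertices_def by (subst card_Un_disjoint, insert pp_finP[OF pp] pp_finL[OF pp], auto)
  also have "\<dots> = card P + card L" by (simp add: card_image)
  finally show ?thesis using pp_card_P[OF pp] pp_card_L[OF pp] by simp
qed

lemma card_Vh: "card Vh = 4 * (q * q + q + 1)"
  unfolding double_vertices_def card_cartesian_product card_V by simp

definition "xs0 = (SOME xs. distinct xs \<and> set xs = Vh)"

lemma xs0: "distinct xs0" "set xs0 = UNIV \<times> inc_vertices P L"
proof -
  have "\<exists>xs. distinct xs \<and> set xs = Vh" using finite_distinct_list[OF finVh] by metis
  from someI_ex[OF this] show "distinct xs0" "set xs0 = UNIV \<times> inc_vertices P L"
    unfolding xs0_def double_vertices_def by auto
qed

lemma len_xs0: "length xs0 = 4 * (q * q + q + 1)"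
  using distinct_card[OF xs0(1)] xs0(2) card_Vh unfolding double_vertices_def by simp

lemma adj_mat: "adj_matrix Vh (double_adj inc_adj (Inl p0) (Inr l0)) = kmat xs0 (Mf (Inl p0) (Inr l0))"
  unfolding adj_matrix_def xs0_def[symmetric] Let_def kmat_def Mf_def by (simp add: of_bool_def)

abbreviation "mm \<equiv> 2 * (q * q + q + 1) - 4"

lemma charpoly_eq: "char_poly (kmat xs0 (Mf (Inl p0) (Inr l0))) = fpol (real q) mm"
proof -
  let ?cp = "char_poly (kmat xs0 (Mf (Inl p0) (Inr l0)))"
  let ?f = "fpol (real q) mm"
  have n8: "length xs0 \<ge> 8" unfolding len_xs0 using q2 by simp
  have nm: "length xs0 - 8 = 2 * mm" unfolding len_xs0 using q2 by simp
  have "poly ?cp x ^ 2 = poly ?f x ^ 2" if x: "x > real q" for x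
  proof -
    have q1: "real q \<ge> 1" using q2 by simp
    have "x * x > real q * 1" using x q1 by (intro mult_strict_mono, auto)
    hence x2: "x^2 \<noteq> real q" by (simp add: power2_eq_square)
    have "poly ?cp x ^ 2 = (x^2 - real q) ^ (length xs0 - 8) * (x^2 - real q - NN q)^2 * (gg q (x^2 - real q))^2"
      unfolding charpoly_Km[OF pp l0 p0 xs0] by (rule det_sq[OF pp l0 p0 xs0 x2 n8])
    also have "\<dots> = ((x^2 - (real q + 1)^2) * (x^2 - real q) ^ mm * (poly (cpol (real q)) x * poly (cmpol (real q)) x))^2"
    proof -
      define W where "W = (x^2 - real q) ^ mm"
      define G where "G = gg q (x^2 - real q)"
      have e1: "(x^2 - real q) ^ (length xs0 - 8) = W^2" unfolding nm W_def by (simp add: power_mult[symmetric] mult.commute)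
      have e2: "x^2 - real q - NN q = x^2 - (real q + 1)^2" by (simp add: power2_eq_square algebra_simps)
      have e3: "poly (cpol (real q)) x * poly (cmpol (real q)) x = G" unfolding G_def cprod by (simp add: algebra_simps power2_eq_square)
      show ?thesis unfolding e1 e2 e3 W_def[symmetric] G_def[symmetric] by (simp add: power_mult_distrib)
    qed
    also have "\<dots> = poly ?f x ^ 2" by (simp add: poly_fpol)
    finally show ?thesis .
  qed
  hence "?cp ^ 2 = ?f ^ 2" by (intro poly_sq_eq[of q], auto)
  hence "?cp = ?f \<or> ?cp = - ?f" by (simp add: power2_eq_iff)
  moreover have "lead_coeff ?cp = 1"
    using degree_monic_char_poly[OF kmat_carrier, of xs0 "Mf (Inl p0) (Inr l0)"] by simp
  moreover have "lead_coeff ?f = 1" by (rule lead_fpol)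
  ultimately show ?thesis by auto
qed

lemma main_special: "\<exists>R. HL_index Vh (double_adj inc_adj (Inl p0) (Inr l0)) = R \<and>
   sqrt (real q - 1) - 1 < R \<and> R < sqrt (real q) - 1 \<and> poly (cpol (real q)) R = 0"
proof -
  have Q: "real q \<ge> 2" using q2 by simp
  obtain R where R: "sqrt (real q - 1) - 1 < R" "R < sqrt (real q) - 1" "poly (cpol (real q)) R = 0"
    "rev (sorted_list_of_multiset (proots (fpol (real q) mm))) ! (mm + 3) = R"
    "rev (sorted_list_of_multiset (proots (fpol (real q) mm))) ! (mm + 4) = - R"
    using fpol_main[OF Q, of mm] by blast
  have R0: "R > 0"
  proof -
    have "sqrt (real q - 1) \<ge> 1" using q2 by simp
    thus ?thesis using R(1) by linarith
  qed
  have ev: "adj_eigenvalues Vh (double_adj inc_adj (Inl p0) (Inr l0)) = rev (sorted_list_of_multiset (proots (fpol (real q) mm)))"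
    unfolding adj_eigenvalues_def adj_mat charpoly_eq ..
  have i1: "(card Vh + 1) div 2 - 1 = mm + 3" unfolding card_Vh using q2 by simp
  have i2: "(card Vh + 2) div 2 - 1 = mm + 4" unfolding card_Vh using q2 by simp
  have "HL_index Vh (double_adj inc_adj (Inl p0) (Inr l0)) = R"
    unfolding HL_index_def Let_def ev i1 i2 R(4) R(5) using R0 by simp
  thus ?thesis using R by blast
qed

end

lemma prime_power_ge2: "prime_power_nat q \<Longrightarrow> q \<ge> 2"
proof -
  assume "prime_power_nat q"
  then obtain p k where pk: "prime p" "k > 0" "q = p ^ k" unfolding prime_power_nat_def by auto
  have p2: "p \<ge> 2" using pk(1) by (rule prime_ge_2_nat)
  have "p ^ 1 \<le> p ^ k" using pk(2) p2 by (intro power_increasing, auto)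
  thus ?thesis using p2 pk(3) by simp
qed

theorem mainTheorem8:
  fixes P :: "'p set" and L :: "'p set set" and q :: nat and v0 v1 :: "'p + 'p set"
  assumes "prime_power_nat q"
    and "proj_plane_order P L q"
    and "v0 \<in> inc_vertices P L" and "v1 \<in> inc_vertices P L" and "inc_adj v0 v1"
  shows "sqrt (real q - 1) - 1 < HL_index (double_vertices (inc_vertices P L)) (double_adj inc_adj v0 v1)
    \<and> HL_index (double_vertices (inc_vertices P L)) (double_adj inc_adj v0 v1) < sqrt (real q) - 1
    \<and> (let r = HL_index (double_vertices (inc_vertices P L)) (double_adj inc_adj v0 v1) in
         r ^ 3 + (1 - real q) * r ^ 2 - 3 * real q * r + (real q) ^ 2 - real q = 0)"
proof -
  have q2: "q \<ge> 2" using assms(1) by (rule prime_power_ge2)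
  obtain x l where xl: "v0 = Inl x \<and> v1 = Inr l \<or> v0 = Inr l \<and> v1 = Inl x" "x \<in> l"
    using assms(5) unfolding inc_adj_def by auto
  have lL: "l \<in> L" using xl(1) assms(3,4) unfolding inc_vertices_def by auto
  have eq: "double_adj inc_adj v0 v1 = double_adj inc_adj (Inl x) (Inr l)"
    using xl(1) double_adj_sym by metis
  obtain R where R: "HL_index (double_vertices (inc_vertices P L)) (double_adj inc_adj (Inl x) (Inr l)) = R"
    "sqrt (real q - 1) - 1 < R" "R < sqrt (real q) - 1" "poly (cpol (real q)) R = 0"
    using main_special[OF assms(2) lL xl(2) q2] by blast
  show ?thesis unfolding eq R(1) Let_def using R(2-4) unfolding poly_cpol by simp
qed

end
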